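(* Let $(\Xi,\mathcal{F},P)$ be a probability space and $\{y_t\}_{t\in\mathbb{Z}}$ a real, mean-zero, covariance-stationary series on it; put $\mathcal{F}_t=\sigma(y_s,\,s\le t)$. Assume (D1) $P\{y_1^2>0\}=1$; (D2) $y_t=\sum_{s=0}^{\infty}\kappa_s\epsilon_{t-s}$ with $\kappa_0=1$, $\sum_s|\kappa_s|<\infty$, $\kappa(z)=\sum_s\kappa_s z^s\neq 0$ for $|z|\le 1$, where $\{\epsilon_t\}$ is a martingale difference sequence with respect to $\{\mathcal{F}_t\}$; (D3) $E[\epsilon_t^2\mid\mathcal{F}_{t-1}]=\sigma_\epsilon^2$ a.s. (constant); (D4) $\sup_t|\epsilon_t|\le K<\infty$ a.s. Fix $\beta\in[0,1]$, let $\theta_t,\bar P_t,e_t,x_t,\phi_t,z_t$ be generated by the recursive algorithm described in the context, and assume there are random variables $k^*$ (integer, $0\le k^*<\infty$) and $K^*\in(0,1)$ such that a.s. $|\theta_{t+k^*}|\le K^*$ for all $t\ge1$. Then: (a) $\liminf_{t\to\infty}t^{-1}\sum_{s=1}^t\phi_s^2\ge\sigma_\epsilon^2$ a.s., and there is a random $K(\xi)<\infty$ a.s. with $(t^{-1}\sum_{s=1}^t\phi_s^2)^{-1}\le K(\xi)$ for all $t\ge1$; thus $\bar P_t^{-1}$ is bounded a.s. (b) For $t\ge1$, $e_t=\sum_{j=0}^\infty\kappa_j^e(t)\epsilon_{t-j}$, $\phi_t=\sum_{j=0}^\infty\kappa_j^\phi(t)\epsilon_{t-j}$, $x_t=\sum_{j=0}^\infty\kappa_j^x(t)\epsilon_{t-j}$,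 $z_t=\sum_{j=0}^\infty\kappa_j^z(t)\epsilon_{t-j}$, where for every $j$ the coefficients $\kappa_j^e(t),\kappa_j^\phi(t),\kappa_j^x(t),\kappa_j^z(t)$ are $\mathcal{F}_{t-1}$-measurable, and there exist (random) $\tilde\kappa_j$ with $\max\{|\kappa_j^e(t)|,|\kappa_j^\phi(t)|,|\kappa_j^x(t)|,|\kappa_j^z(t)|\}\le\tilde\kappa_j$ for all $t,j$ and $\sum_j\tilde\kappa_j<\infty$ a.s. Hence the sequences $e_t,\phi_t,x_t,z_t$ are uniformly bounded a.s. (c) $\theta_t-\theta_{t-1}\to0$ almost surely.
   Context: Recursive algorithm: set $\theta_1=0$, $\bar P_1=0$, $e_1=y_1$, $x_1=y_1$, $\phi_1=x_1$, $z_1=e_1$, and for $t\ge2$: $x_t=y_t-\beta\theta_{t-1}x_{t-1}$; $e_t=y_t-\theta_{t-1}e_{t-1}$; $\phi_t=x_t-\theta_{t-1}\phi_{t-1}$; $\bar P_t=\frac1t\sum_{s=1}^{t-1}\phi_s^2$; $\theta_t=\theta_{t-1}+\bar P_t^{-1}\frac1t\phi_{t-1}e_t$; $z_t=e_t+\theta_{t-1}\phi_{t-1}$. *)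

theory Defs
  imports "HOL-Probability.Probability"
begin

definition nat_filt :: "'a measure \<Rightarrow> (int \<Rightarrow> 'a \<Rightarrow> real) \<Rightarrow> int \<Rightarrow> 'a measure" where
  "nat_filt M y t = sigma (space M) (\<Union>s\<in>{..t}. {y s -` A \<inter> space M | A. A \<in> sets borel})"

text \<open>The recursive algorithm, run on a path Y (only Y 1, Y 2, ... are used).
  State at time t = n + 1 is (theta_t, e_t, x_t, phi_t, sum_{s=1}^t phi_s^2).\<close>
fun alg :: "real \<Rightarrow> (nat \<Rightarrow> real) \<Rightarrow> nat \<Rightarrow> real \<times> real \<times> real \<times> real \<times> real" where
  "alg \<beta> Y 0 = (0, Y 1, Y 1, Y 1, (Y 1)\<^sup>2)"
| "alg \<beta> Y (Suc n) =
     (let t = n + 2; (th, ep, xp, ph, S) = alg \<beta> Y n;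
          x = Y t - \<beta> * th * xp;
          e = Y t - th * ep;
          phi = x - th * ph;
          Pb = S / real t;
          th' = th + inverse Pb * (1 / real t) * ph * e
      in (th', e, x, phi, S + phi\<^sup>2))"

text \<open>Accessors for t >= 1 (index t refers to time t; values at t = 0 are unused).\<close>
definition alg_theta :: "real \<Rightarrow> (nat \<Rightarrow> real) \<Rightarrow> nat \<Rightarrow> real" where
  "alg_theta \<beta> Y t = fst (alg \<beta> Y (t - 1))"
definition alg_e :: "real \<Rightarrow> (nat \<Rightarrow> real) \<Rightarrow> nat \<Rightarrow> real" where
  "alg_e \<beta> Y t = fst (snd (alg \<beta> Y (t - 1)))"
definition alg_x :: "real \<Rightarrow> (nat \<Rightarrow> real) \<Rightarrow> nat \<Rightarrow> real" where
  "alg_x \<beta> Y t = fst (snd (snd (alg \<beta> Y (t - 1))))"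
definition alg_phi :: "real \<Rightarrow> (nat \<Rightarrow> real) \<Rightarrow> nat \<Rightarrow> real" where
  "alg_phi \<beta> Y t = fst (snd (snd (snd (alg \<beta> Y (t - 1)))))"
definition alg_Pbar :: "real \<Rightarrow> (nat \<Rightarrow> real) \<Rightarrow> nat \<Rightarrow> real" where
  "alg_Pbar \<beta> Y t = (1 / real t) * (\<Sum>s=1..<t. (alg_phi \<beta> Y s)\<^sup>2)"
definition alg_z :: "real \<Rightarrow> (nat \<Rightarrow> real) \<Rightarrow> nat \<Rightarrow> real" where
  "alg_z \<beta> Y t = (if t \<le> 1 then alg_e \<beta> Y t
                   else alg_e \<beta> Y t + alg_theta \<beta> Y (t - 1) * alg_phi \<beta> Y (t - 1))"

end

theory Submission
  imports Defs "HOL-Library.Discrete_Functions"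
begin
definition alg_S :: "real \<Rightarrow> (nat \<Rightarrow> real) \<Rightarrow> nat \<Rightarrow> real" where
  "alg_S \<beta> Y t = snd (snd (snd (snd (alg \<beta> Y (t - 1)))))"

lemma alg_base:
  "alg_theta \<beta> Y 0 = 0" "alg_theta \<beta> Y (Suc 0) = 0"
  "alg_e \<beta> Y (Suc 0) = Y 1" "alg_x \<beta> Y (Suc 0) = Y 1" "alg_phi \<beta> Y (Suc 0) = Y 1"
  "alg_S \<beta> Y (Suc 0) = (Y 1)^2"
  by (simp_all add: alg_theta_def alg_e_def alg_x_def alg_phi_def alg_S_def)

lemma alg_rec:
  "alg_e \<beta> Y (Suc (Suc n)) = Y (n+2) - alg_theta \<beta> Y (Suc n) * alg_e \<beta> Y (Suc n)"
  "alg_x \<beta> Y (Suc (Suc n)) = Y (n+2) - \<beta> * alg_theta \<beta> Y (Suc n) * alg_x \<beta> Y (Suc n)"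
  "alg_phi \<beta> Y (Suc (Suc n)) = alg_x \<beta> Y (Suc (Suc n)) - alg_theta \<beta> Y (Suc n) * alg_phi \<beta> Y (Suc n)"
  "alg_S \<beta> Y (Suc (Suc n)) = alg_S \<beta> Y (Suc n) + (alg_phi \<beta> Y (Suc (Suc n)))^2"
  "alg_theta \<beta> Y (Suc (Suc n)) = alg_theta \<beta> Y (Suc n) + inverse (alg_S \<beta> Y (Suc n) / real (n+2)) * (1 / real (n+2)) * alg_phi \<beta> Y (Suc n) * alg_e \<beta> Y (Suc (Suc n))"
  by (simp_all add: alg_theta_def alg_e_def alg_x_def alg_phi_def alg_S_def Let_def split: prod.splits)

lemma alg_S_sum: "alg_S \<beta> Y (Suc n) = (\<Sum>s=1..Suc n. (alg_phi \<beta> Y s)^2)"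
  by (induction n) (simp_all add: alg_base alg_rec)

lemma alg_theta_diff:
  "alg_theta \<beta> Y (Suc (Suc n)) - alg_theta \<beta> Y (Suc n) = alg_phi \<beta> Y (Suc n) * alg_e \<beta> Y (Suc (Suc n)) / alg_S \<beta> Y (Suc n)"
proof -
  have "inverse (alg_S \<beta> Y (Suc n) / real (n+2)) * (1 / real (n+2)) = inverse (alg_S \<beta> Y (Suc n))"
    by (simp add: field_simps)
  then show ?thesis by (simp add: alg_rec field_simps)
qed

fun cE :: "real \<Rightarrow> (nat \<Rightarrow> real) \<Rightarrow> (nat \<Rightarrow> real) \<Rightarrow> nat \<Rightarrow> nat \<Rightarrow> real" where
  "cE b k th 0 j = k j"
| "cE b k th (Suc n) j = k j - b * th (Suc n) * (case j of 0 \<Rightarrow> 0 | Suc i \<Rightarrow> cE b k th n i)"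

fun cP :: "real \<Rightarrow> (nat \<Rightarrow> real) \<Rightarrow> (nat \<Rightarrow> real) \<Rightarrow> nat \<Rightarrow> nat \<Rightarrow> real" where
  "cP b k th 0 j = k j"
| "cP b k th (Suc n) j = cE b k th (Suc n) j - th (Suc n) * (case j of 0 \<Rightarrow> 0 | Suc i \<Rightarrow> cP b k th n i)"

definition cZ :: "(nat \<Rightarrow> real) \<Rightarrow> (nat \<Rightarrow> real) \<Rightarrow> real \<Rightarrow> nat \<Rightarrow> nat \<Rightarrow> real" where
  "cZ k th b n j = (case n of 0 \<Rightarrow> cE 1 k th 0 j
      | Suc m \<Rightarrow> cE 1 k th (Suc m) j + th (Suc m) * (case j of 0 \<Rightarrow> 0 | Suc i \<Rightarrow> cP b k th m i))"

definition shft :: "(nat \<Rightarrow> real) \<Rightarrow> nat \<Rightarrow> real" where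
  "shft f j = (case j of 0 \<Rightarrow> 0 | Suc i \<Rightarrow> f i)"

lemma sums_shft: "f sums s \<Longrightarrow> shft f sums s"
proof -
  assume "f sums s"
  then have "(\<lambda>n. shft f (Suc n)) sums s" by (simp add: shft_def)
  then show ?thesis using sums_Suc_iff[of "shft f" s] by (simp add: shft_def)
qed

lemma sums_repr:
  fixes yy ep :: "int \<Rightarrow> real" and b :: real
  assumes MA: "\<And>t. (\<lambda>s. k s * ep (t - int s)) sums yy t"
  assumes Yeq: "\<And>s. Y s = yy (int s)"
  shows "(\<lambda>j. cE 1 k (alg_theta b Y) n j * ep (int (Suc n) - int j)) sums alg_e b Y (Suc n)"
    "(\<lambda>j. cE b k (alg_theta b Y) n j * ep (int (Suc n) - int j)) sums alg_x b Y (Suc n)"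
    "(\<lambda>j. cP b k (alg_theta b Y) n j * ep (int (Suc n) - int j)) sums alg_phi b Y (Suc n)"
    "(\<lambda>j. cZ k (alg_theta b Y) b n j * ep (int (Suc n) - int j)) sums alg_z b Y (Suc n)"
proof -
  have MA': "(\<lambda>s. k s * ep (int t - int s)) sums Y t" for t using MA[of "int t"] Yeq[of t] by simp
  have gen: "(\<lambda>j. (k j - c * (case j of 0 \<Rightarrow> 0 | Suc i \<Rightarrow> f i)) * ep (int (Suc (Suc n)) - int j))
       sums (Y (Suc (Suc n)) - c * v)"
    if "(\<lambda>j. f j * ep (int (Suc n) - int j)) sums v" for c f v n
  proof -
    have "(\<lambda>j. c * (f j * ep (int (Suc n) - int j))) sums (c * v)" using sums_mult[OF that] by simp
    then have "shft (\<lambda>j. c * (f j * ep (int (Suc n) - int j))) sums (c * v)" by (rule sums_shft)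
    moreover have "shft (\<lambda>j. c * (f j * ep (int (Suc n) - int j))) = (\<lambda>j. c * (case j of 0 \<Rightarrow> 0 | Suc i \<Rightarrow> f i) * ep (int (Suc (Suc n)) - int j))"
      by (auto simp: shft_def fun_eq_iff algebra_simps split: nat.splits)
    ultimately have "(\<lambda>j. c * (case j of 0 \<Rightarrow> 0 | Suc i \<Rightarrow> f i) * ep (int (Suc (Suc n)) - int j)) sums (c * v)" by simp
    from sums_diff[OF MA'[of "Suc (Suc n)"] this] show ?thesis by (simp add: algebra_simps)
  qed
  have gen2: "(\<lambda>j. (g j - c * (case j of 0 \<Rightarrow> 0 | Suc i \<Rightarrow> f i)) * ep (int (Suc (Suc n)) - int j))
       sums (w - c * v)"
    if "(\<lambda>j. f j * ep (int (Suc n) - int j)) sums v" "(\<lambda>j. g j * ep (int (Suc (Suc n)) - int j)) sums w" for c f v n g w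
  proof -
    have "(\<lambda>j. c * (f j * ep (int (Suc n) - int j))) sums (c * v)" using sums_mult[OF that(1)] by simp
    then have "shft (\<lambda>j. c * (f j * ep (int (Suc n) - int j))) sums (c * v)" by (rule sums_shft)
    moreover have "shft (\<lambda>j. c * (f j * ep (int (Suc n) - int j))) = (\<lambda>j. c * (case j of 0 \<Rightarrow> 0 | Suc i \<Rightarrow> f i) * ep (int (Suc (Suc n)) - int j))"
      by (auto simp: shft_def fun_eq_iff algebra_simps split: nat.splits)
    ultimately have "(\<lambda>j. c * (case j of 0 \<Rightarrow> 0 | Suc i \<Rightarrow> f i) * ep (int (Suc (Suc n)) - int j)) sums (c * v)" by simp
    from sums_diff[OF that(2) this] show ?thesis by (simp add: algebra_simps)
  qed
  have e: "(\<lambda>j. cE 1 k (alg_theta b Y) n j * ep (int (Suc n) - int j)) sums alg_e b Y (Suc n)" for n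
  proof (induction n)
    case 0 then show ?case using MA'[of 1] by (simp add: alg_base)
  next
    case (Suc n)
    from gen[OF Suc, of "alg_theta b Y (Suc n)"] show ?case
      by (simp add: alg_rec  add.commute)
  qed
  have x: "(\<lambda>j. cE b k (alg_theta b Y) n j * ep (int (Suc n) - int j)) sums alg_x b Y (Suc n)" for n
  proof (induction n)
    case 0 then show ?case using MA'[of 1] by (simp add: alg_base)
  next
    case (Suc n)
    from gen[OF Suc, of "b * (alg_theta b Y) (Suc n)"] show ?case
      by (simp add: alg_rec  add.commute mult.assoc)
  qed
  have p: "(\<lambda>j. cP b k (alg_theta b Y) n j * ep (int (Suc n) - int j)) sums alg_phi b Y (Suc n)" for n
  proof (induction n)
    case 0 then show ?case using MA'[of 1] by (simp add: alg_base)
  next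
    case (Suc n)
    from gen2[OF Suc x[of "Suc n"], of "alg_theta b Y (Suc n)"] show ?case
      by (simp add: alg_rec )
  qed
  show "(\<lambda>j. cE 1 k (alg_theta b Y) n j * ep (int (Suc n) - int j)) sums alg_e b Y (Suc n)" by (rule e)
  show "(\<lambda>j. cE b k (alg_theta b Y) n j * ep (int (Suc n) - int j)) sums alg_x b Y (Suc n)" by (rule x)
  show "(\<lambda>j. cP b k (alg_theta b Y) n j * ep (int (Suc n) - int j)) sums alg_phi b Y (Suc n)" by (rule p)
  show "(\<lambda>j. cZ k (alg_theta b Y) b n j * ep (int (Suc n) - int j)) sums alg_z b Y (Suc n)"
  proof (cases n)
    case 0 then show ?thesis using e[of 0] by (simp add: cZ_def alg_z_def)
  next
    case (Suc m)
    have "(\<lambda>j. (cE 1 k (alg_theta b Y) (Suc m) j - (- (alg_theta b Y) (Suc m)) * (case j of 0 \<Rightarrow> 0 | Suc i \<Rightarrow> cP b k (alg_theta b Y) m i)) * ep (int (Suc (Suc m)) - int j))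
       sums (alg_e b Y (Suc (Suc m)) - (- (alg_theta b Y) (Suc m)) * alg_phi b Y (Suc m))"
      by (rule gen2[OF p e])
    then show ?thesis using Suc by (simp add: cZ_def alg_z_def)
  qed
qed

fun Gs :: "(nat \<Rightarrow> real) \<Rightarrow> real \<Rightarrow> nat \<Rightarrow> real" where
  "Gs k r 0 = \<bar>k 0\<bar>"
| "Gs k r (Suc j) = \<bar>k (Suc j)\<bar> + r * Gs k r j"

fun Hs :: "(nat \<Rightarrow> real) \<Rightarrow> real \<Rightarrow> nat \<Rightarrow> real" where
  "Hs k r 0 = Gs k r 0"
| "Hs k r (Suc j) = Gs k r (Suc j) + r * Hs k r j"

lemma Gs_nonneg: "0 \<le> r \<Longrightarrow> 0 \<le> Gs k r j"
  by (induction j) auto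

lemma Gs_ge: "0 \<le> r \<Longrightarrow> \<bar>k j\<bar> \<le> Gs k r j"
  by (cases j) (auto intro!: mult_nonneg_nonneg Gs_nonneg)

lemma Hs_ge: "0 \<le> r \<Longrightarrow> Gs k r j \<le> Hs k r j"
proof (induction j)
  case (Suc j)
  have "0 \<le> Hs k r j" using Suc Gs_nonneg[of r k j] by linarith
  then show ?case using Suc by simp
qed simp

lemma Hs_nonneg: "0 \<le> r \<Longrightarrow> 0 \<le> Hs k r j"
  using Hs_ge Gs_nonneg order_trans by blast

lemma rec_summable:
  fixes a g :: "nat \<Rightarrow> real"
  assumes a0: "\<And>j. 0 \<le> a j" and sa: "summable a" and r: "0 \<le> r" "r < 1"
    and g0: "g 0 = a 0" and gS: "\<And>j. g (Suc j) = a (Suc j) + r * g j"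
  shows "summable g"
proof -
  have gnn: "0 \<le> g j" for j by (induction j) (use a0 r g0 gS in auto)
  have eq: "(\<Sum>j<Suc N. g j) = (\<Sum>j<Suc N. a j) + r * (\<Sum>j<N. g j)" for N
  proof (induction N)
    case (Suc N)
    have "(\<Sum>j<Suc (Suc N). g j) = (\<Sum>j<Suc N. g j) + g (Suc N)" by simp
    also have "\<dots> = (\<Sum>j<Suc N. a j) + r * (\<Sum>j<N. g j) + a (Suc N) + r * g N" using Suc gS by simp
    also have "\<dots> = (\<Sum>j<Suc (Suc N). a j) + r * (\<Sum>j<Suc N. g j)" by (simp add: algebra_simps)
    finally show ?case .
  qed (simp add: g0)
  have bd: "(\<Sum>j<N. g j) \<le> suminf a / (1 - r)" for N
  proof (cases N)
    case 0 then show ?thesis using suminf_nonneg[OF sa a0] r by simp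
  next
    case (Suc M)
    have "(\<Sum>j<M. g j) \<le> (\<Sum>j<Suc M. g j)" by (simp add: gnn)
    moreover have "(\<Sum>j<Suc M. a j) \<le> suminf a" by (intro sum_le_suminf[OF sa]) (auto simp: a0)
    moreover have "r * (\<Sum>j<M. g j) \<le> r * (\<Sum>j<Suc M. g j)"
      using calculation(1) r by (intro mult_left_mono) auto
    ultimately have "(\<Sum>j<Suc M. g j) \<le> suminf a + r * (\<Sum>j<Suc M. g j)"
      using eq[of M] by linarith
    then have "(1 - r) * (\<Sum>j<Suc M. g j) \<le> suminf a" by (simp add: algebra_simps)
    then show ?thesis using Suc r by (simp add: field_simps)
  qed
  show ?thesis by (rule summableI_nonneg_bounded[OF gnn bd])
qed

lemma Gs_summable: "summable (\<lambda>s. \<bar>k s\<bar>) \<Longrightarrow> 0 \<le> r \<Longrightarrow> r < 1 \<Longrightarrow> summable (Gs k r)"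
  by (rule rec_summable[where a="\<lambda>s. \<bar>k s\<bar>"]) auto

lemma Hs_summable: "summable (\<lambda>s. \<bar>k s\<bar>) \<Longrightarrow> 0 \<le> r \<Longrightarrow> r < 1 \<Longrightarrow> summable (Hs k r)"
  by (rule rec_summable[where a="Gs k r"]) (auto simp: Gs_nonneg Gs_summable)

context
  fixes th k :: "nat \<Rightarrow> real" and r C :: real and kk :: nat
  assumes r: "0 < r" and C: "1 \<le> C" and thC: "\<And>s. \<bar>th s\<bar> \<le> C * r"
    and thr: "\<And>s. s > kk \<Longrightarrow> \<bar>th s\<bar> \<le> r"
begin

lemma Cpow: "1 \<le> C ^ m" using C one_le_power by blast
lemma Cmono: "m \<le> m' \<Longrightarrow> C ^ m \<le> C ^ m'" using C power_increasing by blast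

lemma coefE:
  assumes b: "\<bar>b\<bar> \<le> 1"
  shows "\<bar>cE b k th n j\<bar> \<le> C ^ (min n kk) * Gs k r j"
proof -
  have thb: "\<bar>b * th s\<bar> \<le> \<bar>th s\<bar>" for s using b by (simp add: abs_mult mult_left_le_one_le)
  have step: "\<bar>u - c * v\<bar> \<le> C ^ min (Suc n) kk * (g + r * G)"
    if "\<bar>u\<bar> \<le> C ^ min (Suc n) kk * g" "\<bar>v\<bar> \<le> C ^ min n kk * G" "\<bar>c\<bar> \<le> \<bar>th (Suc n)\<bar>" "0 \<le> G"
    for u c v g G n
  proof -
    have "\<bar>u - c * v\<bar> \<le> \<bar>u\<bar> + \<bar>c\<bar> * \<bar>v\<bar>" using abs_triangle_ineq4[of u "c * v"] by (simp add: abs_mult)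
    also have "\<bar>c\<bar> * \<bar>v\<bar> \<le> C ^ min (Suc n) kk * (r * G)"
    proof (cases "n < kk")
      case True
      then have m: "min (Suc n) kk = Suc (min n kk)" by simp
      have "\<bar>c\<bar> * \<bar>v\<bar> \<le> (C * r) * (C ^ min n kk * G)"
        using that thC[of "Suc n"] by (intro mult_mono) auto
      then show ?thesis by (simp add: m algebra_simps)
    next
      case False
      then have m: "min (Suc n) kk = min n kk" by simp
      have "\<bar>c\<bar> \<le> r" using that(3) thr[of "Suc n"] False by simp
      then have "\<bar>c\<bar> * \<bar>v\<bar> \<le> r * (C ^ min n kk * G)"
        using that r by (intro mult_mono) auto
      then show ?thesis by (simp add: m algebra_simps)
    qed
    finally show ?thesis using that(1) by (simp add: algebra_simps)
  qed
  show ?thesis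
  proof (induction n arbitrary: j)
    case 0 then show ?case using Gs_ge[of r k j] r by simp
  next
    case (Suc n)
    show ?case
    proof (cases j)
      case 0
      then show ?thesis using Cpow[of "min (Suc n) kk"] by (simp add: mult_le_cancel_right1)
    next
      case (Suc i)
      have "\<bar>k (Suc i) - (b * th (Suc n)) * cE b k th n i\<bar> \<le> C ^ min (Suc n) kk * (\<bar>k (Suc i)\<bar> + r * Gs k r i)"
        by (rule step) (use Cpow Suc.IH thb Gs_nonneg r in \<open>auto simp: mult_le_cancel_right1\<close>)
      then show ?thesis using Suc by simp
    qed
  qed
qed

lemma coefP:
  assumes b: "\<bar>b\<bar> \<le> 1"
  shows "\<bar>cP b k th n j\<bar> \<le> C ^ (2 * min n kk) * Hs k r j"
proof (induction n arbitrary: j)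
  case 0 then show ?case using Gs_ge[of r k j] Hs_ge[of r k j] r by simp
next
  case (Suc n)
  have E': "\<bar>cE b k th (Suc n) j'\<bar> \<le> C ^ (2 * min (Suc n) kk) * Gs k r j'" for j'
    using coefE[OF b, of "Suc n" j'] mult_right_mono[OF Cmono[of "min (Suc n) kk" "2 * min (Suc n) kk"] Gs_nonneg[of r k j']] r
    by simp
  show ?case
  proof (cases j)
    case 0
    then show ?thesis using E'[of 0] by simp
  next
    case (Suc i)
    have step2: "\<bar>u - c * v\<bar> \<le> C ^ (2 * min (Suc n) kk) * (g + r * G)"
      if "\<bar>u\<bar> \<le> C ^ (2 * min (Suc n) kk) * g" "\<bar>v\<bar> \<le> C ^ (2 * min n kk) * G" "\<bar>c\<bar> \<le> \<bar>th (Suc n)\<bar>" "0 \<le> G"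
      for u c v g G
    proof -
      have "\<bar>u - c * v\<bar> \<le> \<bar>u\<bar> + \<bar>c\<bar> * \<bar>v\<bar>" using abs_triangle_ineq4[of u "c * v"] by (simp add: abs_mult)
      also have "\<bar>c\<bar> * \<bar>v\<bar> \<le> C ^ (2 * min (Suc n) kk) * (r * G)"
      proof (cases "n < kk")
        case True
        then have m: "2 * min (Suc n) kk = Suc (Suc (2 * min n kk))" by simp
        have "\<bar>c\<bar> * \<bar>v\<bar> \<le> (C * r) * (C ^ (2 * min n kk) * G)"
          using that thC[of "Suc n"] by (intro mult_mono) auto
        also have "\<dots> \<le> (C * C * r) * (C ^ (2 * min n kk) * G)"
          using C r that(4) Cpow[of "2 * min n kk"]
          by (intro mult_right_mono) (auto simp: mult_le_cancel_right1)
        finally show ?thesis by (simp add: m algebra_simps)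
      next
        case False
        then have m: "min (Suc n) kk = min n kk" by simp
        have "\<bar>c\<bar> \<le> r" using that(3) thr[of "Suc n"] False by simp
        then have "\<bar>c\<bar> * \<bar>v\<bar> \<le> r * (C ^ (2 * min n kk) * G)"
          using that r by (intro mult_mono) auto
        then show ?thesis by (simp add: m algebra_simps)
      qed
      finally show ?thesis using that(1) by (simp add: algebra_simps)
    qed
    have "\<bar>cE b k th (Suc n) (Suc i) - th (Suc n) * cP b k th n i\<bar> \<le> C ^ (2 * min (Suc n) kk) * (Gs k r (Suc i) + r * Hs k r i)"
      by (rule step2) (use E'[of "Suc i"] Suc.IH Hs_nonneg r in auto)
    then show ?thesis using Suc by simp
  qed
qed

lemma coefE': "\<bar>b\<bar> \<le> 1 \<Longrightarrow> \<bar>cE b k th n j\<bar> \<le> C ^ (2 * kk + 1) * Hs k r j"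
proof -
  assume b: "\<bar>b\<bar> \<le> 1"
  have "C ^ (min n kk) * Gs k r j \<le> C ^ (2 * kk + 1) * Hs k r j"
    using Cmono[of "min n kk" "2 * kk + 1"] Gs_nonneg[of r k j] Hs_ge[of r k j] r Cpow[of "2*kk+1"]
    by (intro mult_mono) auto
  then show ?thesis using coefE[OF b, of n j] by linarith
qed

lemma coefP': "\<bar>b\<bar> \<le> 1 \<Longrightarrow> \<bar>cP b k th n j\<bar> \<le> C ^ (2 * kk + 1) * Hs k r j"
proof -
  assume b: "\<bar>b\<bar> \<le> 1"
  have "C ^ (2 * min n kk) * Hs k r j \<le> C ^ (2 * kk + 1) * Hs k r j"
    by (rule mult_right_mono[OF Cmono]) (use Hs_nonneg r in auto)
  then show ?thesis using coefP[OF b, of n j] by linarith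
qed

lemma coefZ:
  assumes b: "\<bar>b\<bar> \<le> 1"
  shows "\<bar>cZ k th b n j\<bar> \<le> C ^ (2 * kk + 1) * Hs k r j"
proof (cases n)
  case 0
  then show ?thesis using coefE'[of 1 0 j] by (simp add: cZ_def)
next
  case (Suc m)
  show ?thesis
  proof (cases j)
    case 0
    then show ?thesis using coefE'[of 1 n 0] Suc by (simp add: cZ_def)
  next
    case (Suc i)
    have "\<bar>cE 1 k th n j + th n * cP b k th m i\<bar> \<le> \<bar>cE 1 k th n j\<bar> + \<bar>th n\<bar> * \<bar>cP b k th m i\<bar>"
      using abs_triangle_ineq[of "cE 1 k th n j" "th n * cP b k th m i"] by (simp add: abs_mult)
    also have "\<dots> \<le> C ^ (kk) * Gs k r j + (C * r) * (C ^ (2 * kk) * Hs k r i)"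
    proof (intro add_mono mult_mono)
      show "\<bar>cE 1 k th n j\<bar> \<le> C ^ kk * Gs k r j"
        using coefE[of 1 n j] mult_right_mono[OF Cmono[of "min n kk" kk] Gs_nonneg[of r k j]] r
        by simp
      show "\<bar>cP b k th m i\<bar> \<le> C ^ (2 * kk) * Hs k r i"
        using coefP[OF b, of m i] mult_right_mono[OF Cmono[of "2 * min m kk" "2 * kk"] Hs_nonneg[of r k i]] r
        by simp
    qed (use thC r C in auto)
    also have "\<dots> \<le> C ^ (2 * kk + 1) * Gs k r j + C ^ (2 * kk + 1) * (r * Hs k r i)"
    proof (intro add_mono)
      show "C ^ kk * Gs k r j \<le> C ^ (2 * kk + 1) * Gs k r j"
        using Cmono[of kk "2*kk+1"] Gs_nonneg[of r k j] r by (intro mult_right_mono) auto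
    qed (simp add: algebra_simps)
    also have "\<dots> = C ^ (2 * kk + 1) * Hs k r j" using \<open>j = Suc i\<close> by (simp add: algebra_simps)
    finally show ?thesis using Suc \<open>n = Suc m\<close> by (simp add: cZ_def)
  qed
qed

end

context
  fixes M :: "'a measure" and y :: "int \<Rightarrow> 'a \<Rightarrow> real"
  assumes y_meas: "\<And>t. y t \<in> borel_measurable M"
begin

lemma nf_gen_Pow: "(\<Union>s\<in>{..t}. {y s -` A \<inter> space M | A. A \<in> sets borel}) \<subseteq> Pow (space M)"
  by auto

lemma space_nf: "space (nat_filt M y t) = space M"
  unfolding nat_filt_def by (simp add: space_measure_of_conv)

lemma sets_nf: "sets (nat_filt M y t) = sigma_sets (space M) (\<Union>s\<in>{..t}. {y s -` A \<inter> space M | A. A \<in> sets borel})"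
  unfolding nat_filt_def by (rule sets_measure_of[OF nf_gen_Pow])

lemma nf_mono: "s \<le> t \<Longrightarrow> subalgebra (nat_filt M y t) (nat_filt M y s)"
  unfolding subalgebra_def space_nf sets_nf
  by (intro conjI refl sigma_sets_subseteq UN_mono) auto

lemma nf_subalg: "subalgebra M (nat_filt M y t)"
proof -
  have "(\<Union>s\<in>{..t}. {y s -` A \<inter> space M | A. A \<in> sets borel}) \<subseteq> sets M"
    using y_meas by (auto simp: measurable_def)
  then show ?thesis unfolding subalgebra_def space_nf sets_nf
    using sets.sigma_sets_subset by blast
qed

lemma y_nf: "s \<le> t \<Longrightarrow> y s \<in> borel_measurable (nat_filt M y t)"
proof (rule measurableI)
  fix A :: "real set" assume "A \<in> sets borel" "s \<le> t"
  then have "y s -` A \<inter> space M \<in> (\<Union>s\<in>{..t}. {y s -` A \<inter> space M | A. A \<in> sets borel})" by auto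
  then show "y s -` A \<inter> space (nat_filt M y t) \<in> sets (nat_filt M y t)"
    unfolding sets_nf space_nf by auto
qed simp

lemma nf_meas_mono: "f \<in> borel_measurable (nat_filt M y s) \<Longrightarrow> s \<le> t \<Longrightarrow> f \<in> borel_measurable (nat_filt M y t)"
  using measurable_from_subalg[OF nf_mono] by blast

lemma nf_meas_M: "f \<in> borel_measurable (nat_filt M y s) \<Longrightarrow> f \<in> borel_measurable M"
  using measurable_from_subalg[OF nf_subalg] by blast

lemma alg_meas:
  "(\<lambda>\<omega>. alg_theta b (\<lambda>s. y (int s) \<omega>) (Suc n)) \<in> borel_measurable (nat_filt M y (int n + 1)) \<and>
   (\<lambda>\<omega>. alg_e b (\<lambda>s. y (int s) \<omega>) (Suc n)) \<in> borel_measurable (nat_filt M y (int n + 1)) \<and>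
   (\<lambda>\<omega>. alg_x b (\<lambda>s. y (int s) \<omega>) (Suc n)) \<in> borel_measurable (nat_filt M y (int n + 1)) \<and>
   (\<lambda>\<omega>. alg_phi b (\<lambda>s. y (int s) \<omega>) (Suc n)) \<in> borel_measurable (nat_filt M y (int n + 1)) \<and>
   (\<lambda>\<omega>. alg_S b (\<lambda>s. y (int s) \<omega>) (Suc n)) \<in> borel_measurable (nat_filt M y (int n + 1))"
proof (induction n)
  case 0
  have [measurable]: "y 1 \<in> borel_measurable (nat_filt M y 1)" by (rule y_nf) simp
  show ?case by (simp add: alg_base)
next
  case (Suc n)
  have le: "int n + 1 \<le> int (Suc n) + 1" by simp
  have [measurable]: "(\<lambda>\<omega>. alg_theta b (\<lambda>s. y (int s) \<omega>) (Suc n)) \<in> borel_measurable (nat_filt M y (int (Suc n) + 1))"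
   "(\<lambda>\<omega>. alg_e b (\<lambda>s. y (int s) \<omega>) (Suc n)) \<in> borel_measurable (nat_filt M y (int (Suc n) + 1))"
   "(\<lambda>\<omega>. alg_x b (\<lambda>s. y (int s) \<omega>) (Suc n)) \<in> borel_measurable (nat_filt M y (int (Suc n) + 1))"
   "(\<lambda>\<omega>. alg_phi b (\<lambda>s. y (int s) \<omega>) (Suc n)) \<in> borel_measurable (nat_filt M y (int (Suc n) + 1))"
   "(\<lambda>\<omega>. alg_S b (\<lambda>s. y (int s) \<omega>) (Suc n)) \<in> borel_measurable (nat_filt M y (int (Suc n) + 1))"
    using Suc nf_meas_mono[OF _ le] by blast+
  have [measurable]: "(\<lambda>\<omega>. y (int (n+2)) \<omega>) \<in> borel_measurable (nat_filt M y (int (Suc n) + 1))"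
    by (rule y_nf) simp
  have e[measurable]: "(\<lambda>\<omega>. alg_e b (\<lambda>s. y (int s) \<omega>) (Suc (Suc n))) \<in> borel_measurable (nat_filt M y (int (Suc n) + 1))"
    unfolding alg_rec by measurable
  have x[measurable]: "(\<lambda>\<omega>. alg_x b (\<lambda>s. y (int s) \<omega>) (Suc (Suc n))) \<in> borel_measurable (nat_filt M y (int (Suc n) + 1))"
    unfolding alg_rec by measurable
  have p[measurable]: "(\<lambda>\<omega>. alg_phi b (\<lambda>s. y (int s) \<omega>) (Suc (Suc n))) \<in> borel_measurable (nat_filt M y (int (Suc n) + 1))"
    unfolding alg_rec(3) by measurable
  have S: "(\<lambda>\<omega>. alg_S b (\<lambda>s. y (int s) \<omega>) (Suc (Suc n))) \<in> borel_measurable (nat_filt M y (int (Suc n) + 1))"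
    unfolding alg_rec(4) by measurable
  have th: "(\<lambda>\<omega>. alg_theta b (\<lambda>s. y (int s) \<omega>) (Suc (Suc n))) \<in> borel_measurable (nat_filt M y (int (Suc n) + 1))"
    unfolding alg_rec(5) by measurable
  show ?case using e x p S th by blast
qed

lemma theta_meas: "(\<lambda>\<omega>. alg_theta b (\<lambda>s. y (int s) \<omega>) s) \<in> borel_measurable (nat_filt M y (int s))"
proof (cases s)
  case 0 then show ?thesis by (simp add: alg_base)
next
  case (Suc n) then show ?thesis using alg_meas[of b n] by (simp add: add.commute)
qed

lemma acc_meas:
  "(\<lambda>\<omega>. alg_e b (\<lambda>s. y (int s) \<omega>) (Suc n)) \<in> borel_measurable (nat_filt M y (int (Suc n)))"
  "(\<lambda>\<omega>. alg_x b (\<lambda>s. y (int s) \<omega>) (Suc n)) \<in> borel_measurable (nat_filt M y (int (Suc n)))"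
  "(\<lambda>\<omega>. alg_phi b (\<lambda>s. y (int s) \<omega>) (Suc n)) \<in> borel_measurable (nat_filt M y (int (Suc n)))"
  using alg_meas[of b n] by (simp_all add: add.commute)

lemma cE_meas: "(\<lambda>\<omega>. cE c k (\<lambda>s. alg_theta b (\<lambda>s. y (int s) \<omega>) s) n j) \<in> borel_measurable (nat_filt M y (int n))"
proof (induction n arbitrary: j)
  case 0 then show ?case by simp
next
  case (Suc n)
  have [measurable]: "(\<lambda>\<omega>. alg_theta b (\<lambda>s. y (int s) \<omega>) (Suc n)) \<in> borel_measurable (nat_filt M y (int (Suc n)))"
    by (rule theta_meas)
  have [measurable]: "(\<lambda>\<omega>. cE c k (\<lambda>s. alg_theta b (\<lambda>s. y (int s) \<omega>) s) n i) \<in> borel_measurable (nat_filt M y (int (Suc n)))" for i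
    by (rule nf_meas_mono[OF Suc.IH]) simp
  show ?case by (cases j) (simp_all del: of_nat_Suc)
qed

lemma cP_meas: "(\<lambda>\<omega>. cP b k (\<lambda>s. alg_theta b (\<lambda>s. y (int s) \<omega>) s) n j) \<in> borel_measurable (nat_filt M y (int n))"
proof (induction n arbitrary: j)
  case 0 then show ?case by simp
next
  case (Suc n)
  have [measurable]: "(\<lambda>\<omega>. alg_theta b (\<lambda>s. y (int s) \<omega>) (Suc n)) \<in> borel_measurable (nat_filt M y (int (Suc n)))"
    by (rule theta_meas)
  have [measurable]: "(\<lambda>\<omega>. cE b k (\<lambda>s. alg_theta b (\<lambda>s. y (int s) \<omega>) s) (Suc n) i) \<in> borel_measurable (nat_filt M y (int (Suc n)))" for i
    by (rule cE_meas)
  have [measurable]: "(\<lambda>\<omega>. cP b k (\<lambda>s. alg_theta b (\<lambda>s. y (int s) \<omega>) s) n i) \<in> borel_measurable (nat_filt M y (int (Suc n)))" for i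
    by (rule nf_meas_mono[OF Suc.IH]) simp
  show ?case by (cases j) (simp_all del: of_nat_Suc cE.simps)
qed

lemma cZ_meas: "(\<lambda>\<omega>. cZ k (\<lambda>s. alg_theta b (\<lambda>s. y (int s) \<omega>) s) b n j) \<in> borel_measurable (nat_filt M y (int n))"
proof (cases n)
  case 0 then show ?thesis by (simp add: cZ_def)
next
  case (Suc m)
  have [measurable]: "(\<lambda>\<omega>. alg_theta b (\<lambda>s. y (int s) \<omega>) (Suc m)) \<in> borel_measurable (nat_filt M y (int (Suc m)))"
    by (rule theta_meas)
  have [measurable]: "(\<lambda>\<omega>. cE 1 k (\<lambda>s. alg_theta b (\<lambda>s. y (int s) \<omega>) s) (Suc m) i) \<in> borel_measurable (nat_filt M y (int (Suc m)))" for i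
    by (rule cE_meas)
  have [measurable]: "(\<lambda>\<omega>. cP b k (\<lambda>s. alg_theta b (\<lambda>s. y (int s) \<omega>) s) m i) \<in> borel_measurable (nat_filt M y (int (Suc m)))" for i
    by (rule nf_meas_mono[OF cP_meas]) simp
  show ?thesis using Suc by (cases j) (simp_all add: cZ_def del: of_nat_Suc cE.simps)
qed

end

lemma sq_subseq_lim:
  fixes S :: "nat \<Rightarrow> real"
  assumes inc: "\<And>t. \<bar>S (Suc t) - S t\<bar> \<le> C"
    and sq: "\<And>\<epsilon>. \<epsilon> > 0 \<Longrightarrow> eventually (\<lambda>n. \<bar>S (n^2)\<bar> \<le> \<epsilon> * real (n^2)) sequentially"
  shows "(\<lambda>t. S t / real t) \<longlonglongrightarrow> 0"
proof (rule LIMSEQ_I)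
  have C0: "0 \<le> C" using inc[of 0] by linarith
  have diff: "\<bar>S t - S m\<bar> \<le> C * (real t - real m)" if "m \<le> t" for m t
    using that
  proof (induction t rule: dec_induct)
    case (step t)
    have "\<bar>S (Suc t) - S m\<bar> \<le> \<bar>S (Suc t) - S t\<bar> + \<bar>S t - S m\<bar>" by linarith
    also have "\<dots> \<le> C + C * (real t - real m)" using inc[of t] step.IH by linarith
    finally show ?case by (simp add: algebra_simps)
  qed simp
  fix r :: real assume r: "0 < r"
  define \<epsilon> where "\<epsilon> = r / 3"
  have e: "0 < \<epsilon>" using r by (simp add: \<epsilon>_def)
  obtain N1 where N1: "\<And>n. n \<ge> N1 \<Longrightarrow> \<bar>S (n^2)\<bar> \<le> \<epsilon> * real (n^2)"
    using sq[OF e] unfolding eventually_sequentially by blast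
  define N2 where "N2 = nat \<lceil>2 * C / \<epsilon>\<rceil> + 1"
  define N where "N = max N1 N2"
  have N2pos: "N2 \<ge> 1" by (simp add: N2_def)
  show "\<exists>no. \<forall>t\<ge>no. norm (S t / real t - 0) < r"
  proof (intro exI allI impI)
    fix t assume t: "t \<ge> N^2"
    define n where "n = floor_sqrt t"
    have nN: "n \<ge> N" unfolding n_def using t by (simp add: le_floor_sqrtI)
    have n1: "n \<ge> 1" using nN N2pos by (simp add: N_def)
    have nle: "n^2 \<le> t" unfolding n_def by simp
    have tlt: "t < (Suc n)^2" unfolding n_def by (rule Suc_floor_sqrt_power2_gt)
    have tpos: "real t > 0" using nle n1 by (metis of_nat_0_less_iff le_trans less_le_trans one_le_power zero_less_one) 
    have "real t - real (n^2) \<le> 2 * real n"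
    proof -
      have "t \<le> n*n + 2*n" using tlt by (simp add: power2_eq_square)
      then have "real t \<le> real (n*n + 2*n)" by (simp only: of_nat_le_iff)
      then show ?thesis by (simp add: power2_eq_square)
    qed
    have "\<bar>S t\<bar> \<le> \<bar>S (n^2)\<bar> + \<bar>S t - S (n^2)\<bar>" by linarith
    also have "\<dots> \<le> \<epsilon> * real (n^2) + C * (2 * real n)"
      using N1[of n] nN diff[OF nle] C0 \<open>real t - real (n^2) \<le> 2 * real n\<close>
      by (smt (verit, ccfv_SIG) N_def max.bounded_iff mult_left_mono)
    also have "\<dots> \<le> \<epsilon> * real t + \<epsilon> * real t"
    proof (rule add_mono)
      show "\<epsilon> * real (n^2) \<le> \<epsilon> * real t" using nle e by (intro mult_left_mono) auto
      have "2 * C / \<epsilon> \<le> real N2" unfolding N2_def by linarith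
      also have "\<dots> \<le> real n" using nN by (simp add: N_def)
      finally have "2 * C \<le> \<epsilon> * real n" using e by (simp add: field_simps)
      then have "C * (2 * real n) \<le> \<epsilon> * real n * real n" using n1
        by (metis mult.assoc mult.commute mult_right_mono of_nat_0_le_iff)
      also have "\<dots> = \<epsilon> * real (n^2)" by (simp add: power2_eq_square)
      also have "\<dots> \<le> \<epsilon> * real t" using nle e by (intro mult_left_mono) auto
      finally show "C * (2 * real n) \<le> \<epsilon> * real t" .
    qed
    finally have "\<bar>S t\<bar> \<le> 2 * \<epsilon> * real t" by simp
    then have "\<bar>S t\<bar> / real t \<le> 2 * \<epsilon>" using tpos by (simp add: field_simps)
    moreover have "2 * \<epsilon> < r" using r by (simp add: \<epsilon>_def)
    ultimately have "\<bar>S t\<bar> / real t < r" by linarith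
    then show "norm (S t / real t - 0) < r" using tpos by (simp add: abs_div)
  qed
qed

lemma sq_le_of_abs: "\<bar>a\<bar> \<le> (b::real) \<Longrightarrow> a^2 \<le> b^2"
  by (metis abs_ge_zero order_trans power2_abs power_mono)

lemma slln_mds:
  fixes M :: "'a measure" and G :: "nat \<Rightarrow> 'a measure" and d :: "nat \<Rightarrow> 'a \<Rightarrow> real"
  assumes P: "prob_space M"
    and subalg: "\<And>n. subalgebra M (G n)"
    and mono: "\<And>m n. m \<le> n \<Longrightarrow> subalgebra (G n) (G m)"
    and dmeas: "\<And>n. d n \<in> borel_measurable (G n)"
    and bound: "\<And>n. AE \<omega> in M. \<bar>d n \<omega>\<bar> \<le> C"
    and mds: "\<And>n. AE \<omega> in M. real_cond_exp M (G n) (d (Suc n)) \<omega> = 0"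
  shows "AE \<omega> in M. (\<lambda>t. (\<Sum>s=1..t. d s \<omega>) / real t) \<longlonglongrightarrow> 0"
proof -
  interpret prob_space M by (rule P)
  have sfs: "sigma_finite_subalgebra M (G n)" for n
    by (rule finite_measure_subalgebra_is_sigma_finite)
      (simp add: finite_measure_subalgebra_def finite_measure_subalgebra_axioms_def subalg finite_measure_axioms)
  define S where "S t \<omega> = (\<Sum>s=1..t. d s \<omega>)" for t \<omega>
  have dM[measurable]: "d n \<in> borel_measurable M" for n using measurable_from_subalg[OF subalg dmeas] .
  have SG: "S t \<in> borel_measurable (G t)" for t
  proof -
    have "d s \<in> borel_measurable (G t)" if "s \<in> {1..t}" for s
      using measurable_from_subalg[OF mono dmeas] that by auto
    then show ?thesis unfolding S_def by (intro borel_measurable_sum) auto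
  qed
  have SM[measurable]: "S t \<in> borel_measurable M" for t using measurable_from_subalg[OF subalg SG] .
  have allb: "AE \<omega> in M. \<forall>n. \<bar>d n \<omega>\<bar> \<le> C" using bound by (simp add: AE_all_countable)
  have Sb: "AE \<omega> in M. \<bar>S t \<omega>\<bar> \<le> real t * C" for t
    using allb
  proof eventually_elim
    case (elim \<omega>)
    have "\<bar>S t \<omega>\<bar> \<le> (\<Sum>s=1..t. \<bar>d s \<omega>\<bar>)" unfolding S_def by (rule sum_abs)
    also have "\<dots> \<le> (\<Sum>s=1..t. C)" using elim by (intro sum_mono) auto
    finally show ?case by simp
  qed
  have C0: "0 \<le> C"
  proof -
    have "AE \<omega> in M. 0 \<le> C" using bound[of 0] by eventually_elim linarith
    then show ?thesis by simp
  qed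
  have intS2: "integrable M (\<lambda>\<omega>. (S t \<omega>)^2)" for t
  proof (rule integrable_const_bound[where B="(real t * C)^2"])
    show "AE x in M. norm ((S t x)^2) \<le> (real t * C)^2"
      using Sb[of t] by eventually_elim (simp add: sq_le_of_abs)
  qed simp
  have intSd: "integrable M (\<lambda>\<omega>. S t \<omega> * d (Suc t) \<omega>)" for t
  proof (rule integrable_const_bound[where B="(real t * C) * C"])
    show "AE x in M. norm (S t x * d (Suc t) x) \<le> (real t * C) * C"
      using Sb[of t] bound[of "Suc t"] by eventually_elim (simp add: abs_mult mult_mono C0)
  qed simp
  have intd2: "integrable M (\<lambda>\<omega>. (d n \<omega>)^2)" for n
  proof (rule integrable_const_bound[where B="C^2"])
    show "AE x in M. norm ((d n x)^2) \<le> C^2"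
      using bound[of n] by eventually_elim (simp add: sq_le_of_abs)
  qed simp
  have Ed2: "(\<integral>\<omega>. (d n \<omega>)^2 \<partial>M) \<le> C^2" for n
  proof -
    have "(\<integral>\<omega>. (d n \<omega>)^2 \<partial>M) \<le> (\<integral>\<omega>. C^2 \<partial>M)"
      using bound[of n] by (intro integral_mono_AE intd2) (auto elim!: eventually_mono simp: sq_le_of_abs)
    then show ?thesis by (simp add: prob_space)
  qed
  have orth: "(\<integral>\<omega>. S t \<omega> * d (Suc t) \<omega> \<partial>M) = 0" for t
  proof -
    have "(\<integral>\<omega>. S t \<omega> * d (Suc t) \<omega> \<partial>M) = (\<integral>\<omega>. S t \<omega> * real_cond_exp M (G t) (d (Suc t)) \<omega> \<partial>M)"
      using sigma_finite_subalgebra.real_cond_exp_intg(2)[OF sfs intSd SG dM] by simp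
    also have "\<dots> = (\<integral>\<omega>. 0 \<partial>M)"
      using mds[of t] by (intro integral_cong_AE) (auto elim!: eventually_mono)
    finally show ?thesis by simp
  qed
  have ES2: "(\<integral>\<omega>. (S t \<omega>)^2 \<partial>M) \<le> real t * C^2" for t
  proof (induction t)
    case 0 then show ?case by (simp add: S_def)
  next
    case (Suc t)
    have eq: "(S (Suc t) \<omega>)^2 = (S t \<omega>)^2 + 2 * (S t \<omega> * d (Suc t) \<omega>) + (d (Suc t) \<omega>)^2" for \<omega>
      by (simp add: S_def power2_eq_square algebra_simps)
    have "(\<integral>\<omega>. (S (Suc t) \<omega>)^2 \<partial>M) = (\<integral>\<omega>. (S t \<omega>)^2 \<partial>M) + 2 * (\<integral>\<omega>. S t \<omega> * d (Suc t) \<omega> \<partial>M) + (\<integral>\<omega>. (d (Suc t) \<omega>)^2 \<partial>M)"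
      unfolding eq using intS2 intSd intd2 by simp
    also have "\<dots> \<le> real t * C^2 + 0 + C^2" using Suc.IH orth[of t] Ed2[of "Suc t"] by linarith
    finally show ?case by (simp add: algebra_simps)
  qed
  have sqev: "AE \<omega> in M. eventually (\<lambda>n. \<bar>S (n^2) \<omega>\<bar> \<le> inverse (real (Suc m)) * real (n^2)) sequentially" for m
  proof -
    define \<epsilon> where "\<epsilon> = inverse (real (Suc m))"
    have e: "0 < \<epsilon>" by (simp add: \<epsilon>_def)
    define A where "A n = {\<omega> \<in> space M. (\<epsilon> * real (n^2))^2 \<le> (S (n^2) \<omega>)^2}" for n
    have A[measurable]: "A n \<in> sets M" for n unfolding A_def by measurable
    have mA: "measure M (A n) \<le> C^2 / \<epsilon>^2 * inverse (real n ^ 2)" if "n \<ge> 1" for n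
    proof -
      have c: "0 < (\<epsilon> * real (n^2))^2" using e that by simp
      have "measure M (A n) \<le> (\<integral>\<omega>. (S (n^2) \<omega>)^2 \<partial>M) / (\<epsilon> * real (n^2))^2"
        unfolding A_def by (rule integral_Markov_inequality_measure[OF intS2 sets.top _ c]) simp
      also have "\<dots> \<le> real (n^2) * C^2 / (\<epsilon> * real (n^2))^2"
        using ES2[of "n^2"] c by (intro divide_right_mono) auto
      also have "\<dots> = C^2 / \<epsilon>^2 * inverse (real n ^ 2)"
        using that e by (simp add: field_simps power2_eq_square)
      finally show ?thesis .
    qed
    have summ: "summable (\<lambda>n. measure M (A n))"
    proof (rule summable_comparison_test')
      show "summable (\<lambda>n. C^2 / \<epsilon>^2 * inverse (real n ^ 2))"
        by (intro summable_mult inverse_power_summable) simp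
      show "norm (measure M (A n)) \<le> C^2 / \<epsilon>^2 * inverse (real n ^ 2)" if "n \<ge> 1" for n
        using mA[OF that] by simp
    qed
    have "AE \<omega> in M. eventually (\<lambda>n. \<omega> \<in> space M - A n) sequentially"
      by (rule borel_cantelli_AE1[OF A _ summ]) (simp add: less_top[symmetric])
    then show ?thesis
    proof (rule eventually_mono)
      fix \<omega> assume "eventually (\<lambda>n. \<omega> \<in> space M - A n) sequentially"
      then show "eventually (\<lambda>n. \<bar>S (n^2) \<omega>\<bar> \<le> inverse (real (Suc m)) * real (n^2)) sequentially"
      proof (rule eventually_mono)
        fix n assume "\<omega> \<in> space M - A n"
        then have "(S (n^2) \<omega>)^2 < (\<epsilon> * real (n^2))^2" by (auto simp: A_def)
        then have "\<bar>S (n^2) \<omega>\<bar> < \<bar>\<epsilon> * real (n^2)\<bar>" using abs_le_square_iff[of "\<epsilon> * real (n^2)" "S (n^2) \<omega>"] by linarith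
        then show "\<bar>S (n^2) \<omega>\<bar> \<le> inverse (real (Suc m)) * real (n^2)" using e by (simp add: \<epsilon>_def)
      qed
    qed
  qed
  have "AE \<omega> in M. \<forall>m. eventually (\<lambda>n. \<bar>S (n^2) \<omega>\<bar> \<le> inverse (real (Suc m)) * real (n^2)) sequentially"
    using sqev by (simp add: AE_all_countable)
  with allb show ?thesis
  proof (eventually_elim)
    case (elim \<omega>)
    have "(\<lambda>t. S t \<omega> / real t) \<longlonglongrightarrow> 0"
    proof (rule sq_subseq_lim)
      show "\<bar>S (Suc t) \<omega> - S t \<omega>\<bar> \<le> C" for t using elim(1) by (simp add: S_def)
      show "eventually (\<lambda>n. \<bar>S (n^2) \<omega>\<bar> \<le> \<epsilon> * real (n^2)) sequentially" if epos: "\<epsilon> > 0" for \<epsilon>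
      proof -
        obtain m where m: "m > 0" "inverse (real m) < \<epsilon>" using ex_inverse_of_nat_less[OF epos] by auto
        then obtain m' where m': "m = Suc m'" by (cases m) auto
        show ?thesis using elim(2)[rule_format, of m']
        proof (rule eventually_mono)
          fix n assume "\<bar>S (n^2) \<omega>\<bar> \<le> inverse (real (Suc m')) * real (n^2)"
          moreover have "inverse (real (Suc m')) * real (n^2) \<le> \<epsilon> * real (n^2)"
            using m m' by (intro mult_right_mono) auto
          ultimately show "\<bar>S (n^2) \<omega>\<bar> \<le> \<epsilon> * real (n^2)" by linarith
        qed
      qed
    qed
    then show ?case by (simp add: S_def)
  qed
qed

lemma sup_real_bound:
  fixes f :: "nat \<Rightarrow> real"
  assumes "\<And>t. 0 \<le> f t" "\<And>t. f t \<le> b"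
  shows "f t \<le> real_of_ereal (SUP t. ereal (f t))" "real_of_ereal (SUP t. ereal (f t)) \<le> b"
proof -
  define X where "X = (SUP t. ereal (f t))"
  have up: "ereal (f t) \<le> X" for t unfolding X_def by (rule SUP_upper) simp
  have lo: "X \<le> ereal b" unfolding X_def by (rule SUP_least) (use assms in simp)
  have "ereal 0 \<le> X" using up[of 0] assms(1)[of 0] by (meson ereal_less_eq(3) order_trans)
  then obtain x where x: "X = ereal x" using lo by (cases X) auto
  show "f t \<le> real_of_ereal (SUP t. ereal (f t))" using up[of t] x unfolding X_def[symmetric] by simp
  show "real_of_ereal (SUP t. ereal (f t)) \<le> b" using lo x unfolding X_def[symmetric] by simp
qed

lemma abs_sums_le:
  fixes f g :: "nat \<Rightarrow> real"
  assumes "f sums v" "\<And>j. \<bar>f j\<bar> \<le> g j" "summable g"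
  shows "\<bar>v\<bar> \<le> suminf g"
proof -
  have "v \<le> suminf g" by (rule sums_le[OF _ assms(1) summable_sums[OF assms(3)]]) (use assms(2) abs_le_D1 in blast)
  moreover have "-v \<le> suminf g"
    by (rule sums_le[OF _ sums_minus[OF assms(1)] summable_sums[OF assms(3)]]) (use assms(2) abs_le_D2 in blast)
  ultimately show ?thesis by linarith
qed

lemma exists_C:
  fixes th :: "nat \<Rightarrow> real"
  assumes r: "0 < r" and thb: "\<forall>t\<ge>1. \<bar>th (t + kk)\<bar> \<le> r"
  shows "\<exists>C\<ge>1. (\<forall>s. \<bar>th s\<bar> \<le> C * r) \<and> (\<forall>s>kk. \<bar>th s\<bar> \<le> r)"
proof -
  define \<Theta> where "\<Theta> = Max ((\<lambda>s. \<bar>th s\<bar>) ` {..kk})"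
  define C where "C = max 1 (\<Theta> / r)"
  have thr: "\<bar>th s\<bar> \<le> r" if "s > kk" for s
    using thb[rule_format, of "s - kk"] that by simp
  have "\<bar>th s\<bar> \<le> C * r" for s
  proof (cases "s \<le> kk")
    case True
    then have "\<bar>th s\<bar> \<le> \<Theta>" unfolding \<Theta>_def by (intro Max_ge) auto
    also have "\<dots> = (\<Theta> / r) * r" using r by simp
    also have "\<dots> \<le> C * r" unfolding C_def using r by (intro mult_right_mono) auto
    finally show ?thesis .
  next
    case False
    then have "\<bar>th s\<bar> \<le> r" using thr by simp
    also have "\<dots> \<le> C * r" unfolding C_def using r by simp
    finally show ?thesis .
  qed
  moreover have "C \<ge> 1" unfolding C_def by simp
  ultimately show ?thesis using thr by blast
qed

lemma cP_0: "cP b k th n 0 = k 0"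
  by (cases n) simp_all

theorem proposition4p7:
  fixes M :: "'a measure"
    and y eps :: "int \<Rightarrow> 'a \<Rightarrow> real"
    and kappa :: "nat \<Rightarrow> real"
    and sigma_e K \<beta> :: real
    and kstar :: "'a \<Rightarrow> nat"
    and Kstar :: "'a \<Rightarrow> real"
  defines "F \<equiv> nat_filt M y"
    and "theta \<equiv> (\<lambda>t \<omega>. alg_theta \<beta> (\<lambda>s. y (int s) \<omega>) t)"
    and "Pbar \<equiv> (\<lambda>t \<omega>. alg_Pbar \<beta> (\<lambda>s. y (int s) \<omega>) t)"
    and "e \<equiv> (\<lambda>t \<omega>. alg_e \<beta> (\<lambda>s. y (int s) \<omega>) t)"
    and "x \<equiv> (\<lambda>t \<omega>. alg_x \<beta> (\<lambda>s. y (int s) \<omega>) t)"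
    and "phi \<equiv> (\<lambda>t \<omega>. alg_phi \<beta> (\<lambda>s. y (int s) \<omega>) t)"
    and "z \<equiv> (\<lambda>t \<omega>. alg_z \<beta> (\<lambda>s. y (int s) \<omega>) t)"
  assumes M: "prob_space M"
    \<comment> \<open>real, mean-zero, covariance-stationary\<close>
    and y_meas: "\<And>t. y t \<in> borel_measurable M"
    and y_sq_int: "\<And>t. integrable M (\<lambda>\<omega>. (y t \<omega>)\<^sup>2)"
    and y_mean: "\<And>t. (\<integral>\<omega>. y t \<omega> \<partial>M) = 0"
    and y_cov: "\<And>t h. (\<integral>\<omega>. y (t + h) \<omega> * y t \<omega> \<partial>M) = (\<integral>\<omega>. y h \<omega> * y 0 \<omega> \<partial>M)"
    \<comment> \<open>(D1)\<close>
    and D1: "measure M {\<omega> \<in> space M. (y 1 \<omega>)\<^sup>2 > 0} = 1"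
    \<comment> \<open>(D2)\<close>
    and kappa0: "kappa 0 = 1"
    and kappa_abs: "summable (\<lambda>s. \<bar>kappa s\<bar>)"
    and kappa_nz: "\<And>w::complex. norm w \<le> 1 \<Longrightarrow> (\<Sum>s. complex_of_real (kappa s) * w ^ s) \<noteq> 0"
    and y_MA: "AE \<omega> in M. \<forall>t. (\<lambda>s. kappa s * eps (t - int s) \<omega>) sums y t \<omega>"
    and eps_meas: "\<And>t. eps t \<in> borel_measurable M"
    and eps_adapted: "\<And>t. eps t \<in> borel_measurable (F t)"
    and eps_int: "\<And>t. integrable M (eps t)"
    and eps_mds: "\<And>t. AE \<omega> in M. real_cond_exp M (F (t - 1)) (eps t) \<omega> = 0"
    \<comment> \<open>(D3)\<close>
    and D3: "\<And>t. AE \<omega> in M. real_cond_exp M (F (t - 1)) (\<lambda>\<omega>. (eps t \<omega>)\<^sup>2) \<omega> = sigma_e\<^sup>2"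
    \<comment> \<open>(D4)\<close>
    and D4: "AE \<omega> in M. \<forall>t. \<bar>eps t \<omega>\<bar> \<le> K"
    \<comment> \<open>algorithm parameter and boundedness of theta after a random time\<close>
    and beta: "0 \<le> \<beta>" "\<beta> \<le> 1"
    and kstar_meas: "kstar \<in> measurable M (count_space UNIV)"
    and Kstar_meas: "Kstar \<in> borel_measurable M"
    and theta_bdd: "AE \<omega> in M. 0 < Kstar \<omega> \<and> Kstar \<omega> < 1 \<and>
                       (\<forall>t\<ge>1. \<bar>theta (t + kstar \<omega>) \<omega>\<bar> \<le> Kstar \<omega>)"
  shows
    \<comment> \<open>(a)\<close>
    "(AE \<omega> in M. Liminf sequentially (\<lambda>t. ereal ((1 / real t) * (\<Sum>s=1..t. (phi s \<omega>)\<^sup>2)))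
                    \<ge> ereal (sigma_e\<^sup>2))
     \<and> (\<exists>KK :: 'a \<Rightarrow> real. KK \<in> borel_measurable M \<and>
          (AE \<omega> in M. \<forall>t\<ge>1. inverse ((1 / real t) * (\<Sum>s=1..t. (phi s \<omega>)\<^sup>2)) \<le> KK \<omega>))
     \<and> (AE \<omega> in M. \<exists>B. \<forall>t\<ge>2. inverse (Pbar t \<omega>) \<le> B)
     \<comment> \<open>(b)\<close>
     \<and> (\<exists>ke kphi kx kz :: nat \<Rightarrow> nat \<Rightarrow> 'a \<Rightarrow> real.
          (\<forall>t\<ge>1. \<forall>j. ke t j \<in> borel_measurable (F (int t - 1)) \<and>
                      kphi t j \<in> borel_measurable (F (int t - 1)) \<and>
                      kx t j \<in> borel_measurable (F (int t - 1)) \<and>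
                      kz t j \<in> borel_measurable (F (int t - 1)))
        \<and> (AE \<omega> in M. \<forall>t\<ge>1.
              (\<lambda>j. ke t j \<omega> * eps (int t - int j) \<omega>) sums e t \<omega> \<and>
              (\<lambda>j. kphi t j \<omega> * eps (int t - int j) \<omega>) sums phi t \<omega> \<and>
              (\<lambda>j. kx t j \<omega> * eps (int t - int j) \<omega>) sums x t \<omega> \<and>
              (\<lambda>j. kz t j \<omega> * eps (int t - int j) \<omega>) sums z t \<omega>)
        \<and> (\<exists>kt :: nat \<Rightarrow> 'a \<Rightarrow> real. (\<forall>j. kt j \<in> borel_measurable M) \<and>
             (AE \<omega> in M. (\<forall>t\<ge>1. \<forall>j. max (max \<bar>ke t j \<omega>\<bar> \<bar>kphi t j \<omega>\<bar>)
                                        (max \<bar>kx t j \<omega>\<bar> \<bar>kz t j \<omega>\<bar>) \<le> kt j \<omega>)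
                        \<and> summable (\<lambda>j. kt j \<omega>))))
     \<and> (AE \<omega> in M. \<exists>B. \<forall>t\<ge>1. \<bar>e t \<omega>\<bar> \<le> B \<and> \<bar>phi t \<omega>\<bar> \<le> B \<and> \<bar>x t \<omega>\<bar> \<le> B \<and> \<bar>z t \<omega>\<bar> \<le> B)
     \<comment> \<open>(c)\<close>
     \<and> (AE \<omega> in M. (\<lambda>t. theta (Suc t) \<omega> - theta t \<omega>) \<longlonglongrightarrow> 0)"
proof -
  interpret P: prob_space M by (rule M)
  have Fe: "F t = nat_filt M y t" for t by (simp add: F_def)
  have subF: "subalgebra M (F t)" for t unfolding Fe by (rule nf_subalg[OF y_meas])
  have monoF: "s \<le> t \<Longrightarrow> subalgebra (F t) (F s)" for s t unfolding Fe by (rule nf_mono[OF y_meas])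
  have sfsF: "sigma_finite_subalgebra M (F t)" for t
    by (rule finite_measure_subalgebra_is_sigma_finite)
      (simp add: finite_measure_subalgebra_def finite_measure_subalgebra_axioms_def subF P.finite_measure_axioms)
  have FmonoM: "f \<in> borel_measurable (F s) \<Longrightarrow> s \<le> t \<Longrightarrow> f \<in> borel_measurable (F t)" for f s t
    using measurable_from_subalg[OF monoF] by blast
  have FM: "f \<in> borel_measurable (F s) \<Longrightarrow> f \<in> borel_measurable M" for f s
    using measurable_from_subalg[OF subF] by blast
  define Y where "Y \<omega> = (\<lambda>s. y (int s) \<omega>)" for \<omega>
  define th where "th \<omega> = (\<lambda>s. theta s \<omega>)" for \<omega>
  have th_eq: "th \<omega> = alg_theta \<beta> (Y \<omega>)" for \<omega> by (simp add: th_def theta_def Y_def)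
  define ke where "ke t j \<omega> = cE 1 kappa (th \<omega>) (t - 1) j" for t j \<omega>
  define kx where "kx t j \<omega> = cE \<beta> kappa (th \<omega>) (t - 1) j" for t j \<omega>
  define kphi where "kphi t j \<omega> = cP \<beta> kappa (th \<omega>) (t - 1) j" for t j \<omega>
  define kz where "kz t j \<omega> = cZ kappa (th \<omega>) \<beta> (t - 1) j" for t j \<omega>
  have int_eq: "int (t - 1) = int t - 1" if "t \<ge> 1" for t using that by simp
  have ke_meas: "ke t j \<in> borel_measurable (F (int (t - 1)))" for t j
    unfolding ke_def th_eq Y_def Fe using cE_meas[OF y_meas, where c=1 and k=kappa and b=\<beta> and n="t - 1" and j=j] by simp
  have kx_meas: "kx t j \<in> borel_measurable (F (int (t - 1)))" for t j
    unfolding kx_def th_eq Y_def Fe using cE_meas[OF y_meas, where c=\<beta> and k=kappa and b=\<beta> and n="t - 1" and j=j] by simp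
  have kphi_meas: "kphi t j \<in> borel_measurable (F (int (t - 1)))" for t j
    unfolding kphi_def th_eq Y_def Fe using cP_meas[OF y_meas, where k=kappa and b=\<beta> and n="t - 1" and j=j] by simp
  have kz_meas: "kz t j \<in> borel_measurable (F (int (t - 1)))" for t j
    unfolding kz_def th_eq Y_def Fe using cZ_meas[OF y_meas, where k=kappa and b=\<beta> and n="t - 1" and j=j] by simp
  have kphi_meas': "kphi t j \<in> borel_measurable (F (int t - 1))" for t j
  proof (cases t)
    case 0
    have "kphi 0 j = (\<lambda>\<omega>. kappa j)" by (simp add: kphi_def fun_eq_iff)
    then show ?thesis using 0 by simp
  next
    case (Suc n) then show ?thesis using kphi_meas[of t j] by simp
  qed
  have B_meas: "\<forall>t\<ge>1. \<forall>j. ke t j \<in> borel_measurable (F (int t - 1)) \<and>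
                      kphi t j \<in> borel_measurable (F (int t - 1)) \<and>
                      kx t j \<in> borel_measurable (F (int t - 1)) \<and>
                      kz t j \<in> borel_measurable (F (int t - 1))"
  proof (intro allI impI conjI)
    fix t j :: nat assume t: "t \<ge> 1"
    then have ie: "F (int t - 1) = F (int (t - 1))" using int_eq[OF t] by simp
    show "ke t j \<in> borel_measurable (F (int t - 1))" unfolding ie by (rule ke_meas)
    show "kx t j \<in> borel_measurable (F (int t - 1))" unfolding ie by (rule kx_meas)
    show "kphi t j \<in> borel_measurable (F (int t - 1))" unfolding ie by (rule kphi_meas)
    show "kz t j \<in> borel_measurable (F (int t - 1))" unfolding ie by (rule kz_meas)
  qed
  have B_sums: "AE \<omega> in M. \<forall>t\<ge>1.
              (\<lambda>j. ke t j \<omega> * eps (int t - int j) \<omega>) sums e t \<omega> \<and>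
              (\<lambda>j. kphi t j \<omega> * eps (int t - int j) \<omega>) sums phi t \<omega> \<and>
              (\<lambda>j. kx t j \<omega> * eps (int t - int j) \<omega>) sums x t \<omega> \<and>
              (\<lambda>j. kz t j \<omega> * eps (int t - int j) \<omega>) sums z t \<omega>"
    using y_MA
  proof eventually_elim
    case (elim \<omega>)
    show ?case
    proof (intro allI impI)
      fix t :: nat assume "t \<ge> 1"
      then obtain n where n: "t = Suc n" by (cases t) auto
      note R = sums_repr[of kappa "\<lambda>t. eps t \<omega>" "\<lambda>t. y t \<omega>" "Y \<omega>" \<beta> n]
      have MA: "\<And>t. (\<lambda>s. kappa s * eps (t - int s) \<omega>) sums y t \<omega>" using elim by blast
      show "(\<lambda>j. ke t j \<omega> * eps (int t - int j) \<omega>) sums e t \<omega> \<and>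
              (\<lambda>j. kphi t j \<omega> * eps (int t - int j) \<omega>) sums phi t \<omega> \<and>
              (\<lambda>j. kx t j \<omega> * eps (int t - int j) \<omega>) sums x t \<omega> \<and>
              (\<lambda>j. kz t j \<omega> * eps (int t - int j) \<omega>) sums z t \<omega>"
        using R[OF MA] unfolding n ke_def kphi_def kx_def kz_def th_eq e_def phi_def x_def z_def
        by (simp add: Y_def)
    qed
  qed
  have [measurable]: "ke t j \<in> borel_measurable M" "kx t j \<in> borel_measurable M"
    "kphi t j \<in> borel_measurable M" "kz t j \<in> borel_measurable M" for t j
    using ke_meas kx_meas kphi_meas kz_meas FM by blast+
  define mx where "mx t j \<omega> = max (max \<bar>ke t j \<omega>\<bar> \<bar>kphi t j \<omega>\<bar>) (max \<bar>kx t j \<omega>\<bar> \<bar>kz t j \<omega>\<bar>)" for t j \<omega>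
  define kt where "kt j \<omega> = real_of_ereal (SUP t. ereal (mx t j \<omega>))" for j \<omega>
  have kt_meas: "\<forall>j. kt j \<in> borel_measurable M"
    unfolding kt_def mx_def by measurable
  have b1: "\<bar>\<beta>\<bar> \<le> 1" "\<bar>1::real\<bar> \<le> 1" using beta by auto
  have B_bound: "AE \<omega> in M. (\<forall>t\<ge>1. \<forall>j. mx t j \<omega> \<le> kt j \<omega>) \<and> summable (\<lambda>j. kt j \<omega>)"
    using theta_bdd
  proof eventually_elim
    case (elim \<omega>)
    have r: "0 < Kstar \<omega>" "Kstar \<omega> < 1" using elim by auto
    have tb: "\<forall>t\<ge>1. \<bar>th \<omega> (t + kstar \<omega>)\<bar> \<le> Kstar \<omega>" using elim by (simp add: th_def)
    obtain C where C: "C \<ge> 1" "\<And>s. \<bar>th \<omega> s\<bar> \<le> C * Kstar \<omega>" "\<And>s. s > kstar \<omega> \<Longrightarrow> \<bar>th \<omega> s\<bar> \<le> Kstar \<omega>"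
      using exists_C[OF r(1) tb] by blast
    define Bj where "Bj j = C ^ (2 * kstar \<omega> + 1) * Hs kappa (Kstar \<omega>) j" for j
    have mxb: "mx t j \<omega> \<le> Bj j" for t j
    proof -
      have thC: "\<And>s. \<bar>th \<omega> s\<bar> \<le> C * Kstar \<omega>" using C(2) by blast
      have thr: "\<And>s. kstar \<omega> < s \<Longrightarrow> \<bar>th \<omega> s\<bar> \<le> Kstar \<omega>" using C(3) by blast
      have E: "\<And>b n j. \<bar>b\<bar> \<le> 1 \<Longrightarrow> \<bar>cE b kappa (th \<omega>) n j\<bar> \<le> C ^ (2 * kstar \<omega> + 1) * Hs kappa (Kstar \<omega>) j"
        using coefE'[where th="th \<omega>" and kk="kstar \<omega>" and r="Kstar \<omega>" and C=C, OF r(1) C(1) thC thr] by blast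
      have Pp: "\<And>b n j. \<bar>b\<bar> \<le> 1 \<Longrightarrow> \<bar>cP b kappa (th \<omega>) n j\<bar> \<le> C ^ (2 * kstar \<omega> + 1) * Hs kappa (Kstar \<omega>) j"
        using coefP'[where th="th \<omega>" and kk="kstar \<omega>" and r="Kstar \<omega>" and C=C, OF r(1) C(1) thC thr] by blast
      have Z: "\<And>b n j. \<bar>b\<bar> \<le> 1 \<Longrightarrow> \<bar>cZ kappa (th \<omega>) b n j\<bar> \<le> C ^ (2 * kstar \<omega> + 1) * Hs kappa (Kstar \<omega>) j"
        using coefZ[where th="th \<omega>" and kk="kstar \<omega>" and r="Kstar \<omega>" and C=C, OF r(1) C(1) thC thr] by blast
      show ?thesis unfolding mx_def ke_def kx_def kphi_def kz_def Bj_def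
        using E[OF b1(2)] E[OF b1(1)] Pp[OF b1(1)] Z[OF b1(1)] by simp
    qed
    have mx0: "0 \<le> mx t j \<omega>" for t j unfolding mx_def by simp
    have ktb: "mx t j \<omega> \<le> kt j \<omega>" "kt j \<omega> \<le> Bj j" for t j
      unfolding kt_def using sup_real_bound[of "\<lambda>t. mx t j \<omega>" "Bj j"] mx0 mxb by auto
    have sB: "summable Bj" unfolding Bj_def
      by (intro summable_mult Hs_summable kappa_abs) (use r in auto)
    have "summable (\<lambda>j. kt j \<omega>)"
    proof (rule summable_comparison_test[OF _ sB])
      have "\<bar>kt n \<omega>\<bar> \<le> Bj n" for n using ktb(1)[of 0 n] ktb(2)[of n] mx0[of 0 n] by simp
      then show "\<exists>N. \<forall>n\<ge>N. norm (kt n \<omega>) \<le> Bj n" by auto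
    qed
    then show ?case using ktb by blast
  qed
  have B4: "AE \<omega> in M. \<exists>B. \<forall>t\<ge>1. \<bar>e t \<omega>\<bar> \<le> B \<and> \<bar>phi t \<omega>\<bar> \<le> B \<and> \<bar>x t \<omega>\<bar> \<le> B \<and> \<bar>z t \<omega>\<bar> \<le> B"
    using B_sums B_bound D4
  proof eventually_elim
    case (elim \<omega>)
    have K0: "0 \<le> K" using elim(3) by (meson abs_ge_zero order_trans)
    have skt: "summable (\<lambda>j. kt j \<omega>)" using elim(2) by blast
    have hb: "\<bar>v\<bar> \<le> K * suminf (\<lambda>j. kt j \<omega>)"
      if "(\<lambda>j. c j * eps (int t - int j) \<omega>) sums v" "\<And>j. \<bar>c j\<bar> \<le> kt j \<omega>" for c v t
    proof -
      have "\<bar>v\<bar> \<le> suminf (\<lambda>j. K * kt j \<omega>)"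
      proof (rule abs_sums_le[OF that(1)])
        show "\<bar>c j * eps (int t - int j) \<omega>\<bar> \<le> K * kt j \<omega>" for j
        proof -
          have "\<bar>c j\<bar> * \<bar>eps (int t - int j) \<omega>\<bar> \<le> kt j \<omega> * K"
            using that(2)[of j] elim(3) K0 by (intro mult_mono) auto
          then show ?thesis by (simp add: abs_mult mult.commute)
        qed
        show "summable (\<lambda>j. K * kt j \<omega>)" by (intro summable_mult skt)
      qed
      also have "\<dots> = K * suminf (\<lambda>j. kt j \<omega>)" by (rule suminf_mult[OF skt])
      finally show ?thesis .
    qed
    have mxk: "\<And>t j. t \<ge> 1 \<Longrightarrow> mx t j \<omega> \<le> kt j \<omega>" using elim(2) by blast
    show ?case
    proof (intro exI allI impI conjI)
      fix t :: nat assume t: "t \<ge> 1"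
      show "\<bar>e t \<omega>\<bar> \<le> K * suminf (\<lambda>j. kt j \<omega>)"
        by (rule hb[of "\<lambda>j. ke t j \<omega>" t]) (use elim(1) t mxk[OF t] in \<open>auto simp: mx_def\<close>)
      show "\<bar>phi t \<omega>\<bar> \<le> K * suminf (\<lambda>j. kt j \<omega>)"
        by (rule hb[of "\<lambda>j. kphi t j \<omega>" t]) (use elim(1) t mxk[OF t] in \<open>auto simp: mx_def\<close>)
      show "\<bar>x t \<omega>\<bar> \<le> K * suminf (\<lambda>j. kt j \<omega>)"
        by (rule hb[of "\<lambda>j. kx t j \<omega>" t]) (use elim(1) t mxk[OF t] in \<open>auto simp: mx_def\<close>)
      show "\<bar>z t \<omega>\<bar> \<le> K * suminf (\<lambda>j. kt j \<omega>)"
        by (rule hb[of "\<lambda>j. kz t j \<omega>" t]) (use elim(1) t mxk[OF t] in \<open>auto simp: mx_def\<close>)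
    qed
  qed
  have K_ae: "AE \<omega> in M. \<forall>t. \<bar>eps t \<omega>\<bar> \<le> K" by (rule D4)
  have [measurable]: "eps t \<in> borel_measurable M" for t by (rule eps_meas)
  have intE2: "integrable M (\<lambda>\<omega>. (eps t \<omega>)^2)" for t
  proof (rule P.integrable_const_bound[where B="K^2"])
    show "AE \<omega> in M. norm ((eps t \<omega>)^2) \<le> K^2"
      using K_ae by eventually_elim (simp add: sq_le_of_abs)
  qed simp
  have sig_ne: "sigma_e^2 \<noteq> 0"
  proof
    assume s0: "sigma_e^2 = 0"
    have "AE \<omega> in M. eps t \<omega> = 0" for t
    proof -
      have "(\<integral>\<omega>. (eps t \<omega>)^2 \<partial>M) = (\<integral>\<omega>. real_cond_exp M (F (t - 1)) (\<lambda>\<omega>. (eps t \<omega>)^2) \<omega> \<partial>M)"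
        using sigma_finite_subalgebra.real_cond_exp_int(2)[OF sfsF intE2] by simp
      also have "\<dots> = (\<integral>\<omega>. sigma_e^2 \<partial>M)"
        using D3[of t] by (intro integral_cong_AE) (auto elim!: eventually_mono)
      also have "\<dots> = 0" using s0 by simp
      finally have "(\<integral>\<omega>. (eps t \<omega>)^2 \<partial>M) = 0" .
      then have "AE \<omega> in M. (eps t \<omega>)^2 = 0"
        using integral_nonneg_eq_0_iff_AE[OF intE2] by simp
      then show ?thesis by eventually_elim simp
    qed
    then have "AE \<omega> in M. \<forall>t. eps t \<omega> = 0" by (simp add: AE_all_countable)
    then have "AE \<omega> in M. \<not> (y 1 \<omega>)^2 > 0" using y_MA
    proof eventually_elim
      case (elim \<omega>)
      have "(\<lambda>s. kappa s * eps (1 - int s) \<omega>) sums y 1 \<omega>" using elim(2) by blast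
      moreover have "(\<lambda>s. kappa s * eps (1 - int s) \<omega>) sums 0" using elim(1) by simp
      ultimately have "y 1 \<omega> = 0" using sums_unique2 by blast
      then show ?case by simp
    qed
    then have "measure M {\<omega> \<in> space M. (y 1 \<omega>)^2 > 0} = 0" by (rule P.prob_eq_0_AE)
    then show False using D1 by simp
  qed
  then have sig_pos: "0 < sigma_e^2" by simp
  have y1pos: "AE \<omega> in M. 0 < (y 1 \<omega>)^2"
    using P.AE_prob_1[OF D1] by eventually_elim simp
  define w where "w s \<omega> = suminf (\<lambda>j. kphi s (Suc j) \<omega> * eps (int s - int (Suc j)) \<omega>)" for s \<omega>
  have w_meas: "w s \<in> borel_measurable (F (int s - 1))" for s
  proof -
    have [measurable]: "kphi s (Suc j) \<in> borel_measurable (F (int s - 1))" for j by (rule kphi_meas')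
    have [measurable]: "eps (int s - int (Suc j)) \<in> borel_measurable (F (int s - 1))" for j
      by (rule FmonoM[OF eps_adapted]) simp
    show ?thesis unfolding w_def by measurable
  qed
  have w_rep: "AE \<omega> in M. \<forall>s\<ge>1. phi s \<omega> = eps (int s) \<omega> + w s \<omega>"
    using B_sums
  proof eventually_elim
    case (elim \<omega>)
    show ?case
    proof (intro allI impI)
      fix s :: nat assume s: "s \<ge> 1"
      define f where "f j = kphi s j \<omega> * eps (int s - int j) \<omega>" for j
      have "f sums phi s \<omega>" using elim s unfolding f_def by blast
      then have "(\<lambda>j. f (Suc j)) sums (phi s \<omega> - f 0)" using sums_Suc_iff[of f "phi s \<omega> - f 0"] by simp
      then have "w s \<omega> = phi s \<omega> - f 0" unfolding w_def f_def by (simp add: sums_iff)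
      moreover have "f 0 = eps (int s) \<omega>" unfolding f_def kphi_def by (simp add: cP_0 kappa0)
      ultimately show "phi s \<omega> = eps (int s) \<omega> + w s \<omega>" by simp
    qed
  qed
  have monoFi: "m \<le> n \<Longrightarrow> subalgebra (F (int n)) (F (int m))" for m n by (rule monoF) simp
  have slln1: "AE \<omega> in M. (\<lambda>t. (\<Sum>s=1..t. (eps (int s) \<omega>)^2 - sigma_e^2) / real t) \<longlonglongrightarrow> 0"
  proof (rule slln_mds[OF M subF monoFi, where C="K^2 + sigma_e^2"])
    show "(\<lambda>\<omega>. (eps (int n) \<omega>)^2 - sigma_e^2) \<in> borel_measurable (F (int n))" for n
      using eps_adapted[of "int n"] by measurable
    show "AE \<omega> in M. \<bar>(eps (int n) \<omega>)^2 - sigma_e^2\<bar> \<le> K^2 + sigma_e^2" for n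
      using K_ae
    proof eventually_elim
      case (elim \<omega>)
      have "(eps (int n) \<omega>)^2 \<le> K^2" using elim by (simp add: sq_le_of_abs)
      moreover have "0 \<le> (eps (int n) \<omega>)^2" "0 \<le> sigma_e^2" by simp_all
      ultimately show ?case unfolding abs_le_iff by linarith
    qed
    show "AE \<omega> in M. real_cond_exp M (F (int n)) (\<lambda>\<omega>. (eps (int (Suc n)) \<omega>)^2 - sigma_e^2) \<omega> = 0" for n
    proof -
      have ie: "int (Suc n) - 1 = int n" by simp
      have a1: "AE \<omega> in M. real_cond_exp M (F (int n)) (\<lambda>\<omega>. (eps (int (Suc n)) \<omega>)^2) \<omega> = sigma_e^2"
        using D3[of "int (Suc n)"] unfolding ie .
      have a2: "AE \<omega> in M. real_cond_exp M (F (int n)) (\<lambda>\<omega>. sigma_e^2) \<omega> = sigma_e^2"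
        by (rule sigma_finite_subalgebra.real_cond_exp_F_meas[OF sfsF]) simp_all
      have a3: "AE \<omega> in M. real_cond_exp M (F (int n)) (\<lambda>\<omega>. (eps (int (Suc n)) \<omega>)^2 - sigma_e^2) \<omega>
          = real_cond_exp M (F (int n)) (\<lambda>\<omega>. (eps (int (Suc n)) \<omega>)^2) \<omega> - real_cond_exp M (F (int n)) (\<lambda>\<omega>. sigma_e^2) \<omega>"
        by (rule sigma_finite_subalgebra.real_cond_exp_diff[OF sfsF intE2]) simp
      show ?thesis using a1 a2 a3 by eventually_elim simp
    qed
  qed
  define clip where "clip N v = max (- real N) (min (real N) v)" for N :: nat and v :: real
  have clip_abs: "\<bar>clip N v\<bar> \<le> real N" for N v unfolding clip_def by simp
  have slln2: "AE \<omega> in M. \<forall>N. (\<lambda>t. (\<Sum>s=1..t. clip N (w s \<omega>) * eps (int s) \<omega>) / real t) \<longlonglongrightarrow> 0"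
  proof (unfold AE_all_countable, intro allI)
    fix N :: nat
    show "AE \<omega> in M. (\<lambda>t. (\<Sum>s=1..t. clip N (w s \<omega>) * eps (int s) \<omega>) / real t) \<longlonglongrightarrow> 0"
    proof (rule slln_mds[OF M subF monoFi, where C="real N * K"])
      show "(\<lambda>\<omega>. clip N (w n \<omega>) * eps (int n) \<omega>) \<in> borel_measurable (F (int n))" for n
      proof -
        have [measurable]: "w n \<in> borel_measurable (F (int n))" by (rule FmonoM[OF w_meas]) simp
        have [measurable]: "eps (int n) \<in> borel_measurable (F (int n))" by (rule eps_adapted)
        show ?thesis unfolding clip_def by measurable
      qed
      show "AE \<omega> in M. \<bar>clip N (w n \<omega>) * eps (int n) \<omega>\<bar> \<le> real N * K" for n
        using K_ae
      proof eventually_elim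
        case (elim \<omega>)
        show ?case unfolding abs_mult using clip_abs[of N "w n \<omega>"] elim by (intro mult_mono) auto
      qed
      show "AE \<omega> in M. real_cond_exp M (F (int n)) (\<lambda>\<omega>. clip N (w (Suc n) \<omega>) * eps (int (Suc n)) \<omega>) \<omega> = 0" for n
      proof -
        have ie: "int (Suc n) - 1 = int n" by simp
        have [measurable]: "w (Suc n) \<in> borel_measurable (F (int n))" using w_meas[of "Suc n"] unfolding ie .
        have fm[measurable]: "(\<lambda>\<omega>. clip N (w (Suc n) \<omega>)) \<in> borel_measurable (F (int n))" unfolding clip_def by measurable
        have int: "integrable M (\<lambda>\<omega>. clip N (w (Suc n) \<omega>) * eps (int (Suc n)) \<omega>)"
        proof (rule P.integrable_const_bound[where B="real N * K"])
          show "AE \<omega> in M. norm (clip N (w (Suc n) \<omega>) * eps (int (Suc n)) \<omega>) \<le> real N * K"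
            using K_ae
          proof eventually_elim
            case (elim \<omega>)
            show ?case unfolding real_norm_def abs_mult using clip_abs[of N "w (Suc n) \<omega>"] elim by (intro mult_mono) auto
          qed
          show "(\<lambda>\<omega>. clip N (w (Suc n) \<omega>) * eps (int (Suc n)) \<omega>) \<in> borel_measurable M"
            using FM[OF fm] by measurable
        qed
        have a1: "AE \<omega> in M. real_cond_exp M (F (int n)) (\<lambda>\<omega>. clip N (w (Suc n) \<omega>) * eps (int (Suc n)) \<omega>) \<omega>
            = clip N (w (Suc n) \<omega>) * real_cond_exp M (F (int n)) (eps (int (Suc n))) \<omega>"
          by (rule sigma_finite_subalgebra.real_cond_exp_mult[OF sfsF fm eps_meas int])
        have a2: "AE \<omega> in M. real_cond_exp M (F (int n)) (eps (int (Suc n))) \<omega> = 0"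
          using eps_mds[of "int (Suc n)"] unfolding ie .
        show ?thesis using a1 a2 by eventually_elim simp
      qed
    qed
  qed
  define avg where "avg t \<omega> = (1 / real t) * (\<Sum>s=1..t. (phi s \<omega>)^2)" for t \<omega>
  have A1: "AE \<omega> in M. Liminf sequentially (\<lambda>t. ereal (avg t \<omega>)) \<ge> ereal (sigma_e^2)"
    using B4 w_rep slln1 slln2 K_ae
  proof eventually_elim
    case (elim \<omega>)
    obtain B where B: "\<And>t. t \<ge> 1 \<Longrightarrow> \<bar>phi t \<omega>\<bar> \<le> B" using elim(1) by blast
    define N where "N = nat \<lceil>B + K\<rceil>"
    have wb: "clip N (w s \<omega>) = w s \<omega>" if s: "s \<ge> 1" for s
    proof -
      have "\<bar>w s \<omega>\<bar> \<le> \<bar>phi s \<omega>\<bar> + \<bar>eps (int s) \<omega>\<bar>" using elim(2) s by force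
      also have "\<dots> \<le> B + K" using B[OF s] elim(5) by (intro add_mono) auto
      also have "\<dots> \<le> real N" unfolding N_def by linarith
      finally show ?thesis unfolding clip_def by (simp add: abs_le_iff)
    qed
    have L1: "(\<lambda>t. (\<Sum>s=1..t. (eps (int s) \<omega>)^2 - sigma_e^2) / real t) \<longlonglongrightarrow> 0" using elim(3) .
    have L2: "(\<lambda>t. (\<Sum>s=1..t. w s \<omega> * eps (int s) \<omega>) / real t) \<longlonglongrightarrow> 0"
    proof -
      have "(\<Sum>s=1..t. clip N (w s \<omega>) * eps (int s) \<omega>) = (\<Sum>s=1..t. w s \<omega> * eps (int s) \<omega>)" for t
        by (rule sum.cong) (auto simp: wb)
      then show ?thesis using elim(4)[rule_format, of N] by simp
    qed
    define lower where "lower t = (\<Sum>s=1..t. (eps (int s) \<omega>)^2 - sigma_e^2) / real t + sigma_e^2 + 2 * ((\<Sum>s=1..t. w s \<omega> * eps (int s) \<omega>) / real t)" for t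
    have "(\<lambda>t. lower t) \<longlonglongrightarrow> 0 + sigma_e^2 + 2 * 0"
      unfolding lower_def by (intro tendsto_add tendsto_mult L1 L2 tendsto_const)
    then have "(\<lambda>t. lower t) \<longlonglongrightarrow> sigma_e^2" by simp
    then have Llim: "(\<lambda>t. ereal (lower t)) \<longlonglongrightarrow> ereal (sigma_e^2)" by (rule tendsto_ereal)
    have le: "lower t \<le> avg t \<omega>" if t: "t \<ge> 1" for t
    proof -
      have tp: "0 < real t" using t by simp
      have "(\<Sum>s=1..t. (eps (int s) \<omega>)^2 - sigma_e^2) = (\<Sum>s=1..t. (eps (int s) \<omega>)^2) - real t * sigma_e^2"
        by (simp add: sum_subtractf)
      then have "lower t = (1 / real t) * (\<Sum>s=1..t. (eps (int s) \<omega>)^2 + 2 * (w s \<omega> * eps (int s) \<omega>))"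
        unfolding lower_def using tp by (simp add: sum.distrib sum_distrib_left field_simps)
      also have "\<dots> \<le> avg t \<omega>" unfolding avg_def
      proof (intro mult_left_mono sum_mono)
        fix s assume "s \<in> {1..t}"
        then have "phi s \<omega> = eps (int s) \<omega> + w s \<omega>" using elim(2) by auto
        then show "(eps (int s) \<omega>)^2 + 2 * (w s \<omega> * eps (int s) \<omega>) \<le> (phi s \<omega>)^2"
          by (simp add: power2_eq_square algebra_simps)
      qed simp
      finally show ?thesis .
    qed
    have "ereal (sigma_e^2) = Liminf sequentially (\<lambda>t. ereal (lower t))"
      using lim_imp_Liminf[OF _ Llim] by simp
    also have "\<dots> \<le> Liminf sequentially (\<lambda>t. ereal (avg t \<omega>))"
      by (rule Liminf_mono) (use le in \<open>auto simp: eventually_sequentially\<close>)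
    finally show ?case .
  qed
  have phi_M[measurable]: "phi s \<in> borel_measurable M" for s
  proof -
    have "phi s = (\<lambda>\<omega>. alg_phi \<beta> (\<lambda>s. y (int s) \<omega>) (Suc (s - 1)))"
      by (simp add: phi_def alg_phi_def fun_eq_iff)
    then show ?thesis
      using nf_meas_M[OF y_meas acc_meas(3)[OF y_meas, where b=\<beta> and n="s - 1"]] by simp
  qed
  have avg0: "0 \<le> avg t \<omega>" for t \<omega> unfolding avg_def by (intro mult_nonneg_nonneg sum_nonneg) auto
  define KK where "KK \<omega> = real_of_ereal (SUP t. ereal (inverse (avg t \<omega>)))" for \<omega>
  have KK_meas: "KK \<in> borel_measurable M" unfolding KK_def avg_def by measurable
  have A2: "AE \<omega> in M. \<forall>t. inverse (avg t \<omega>) \<le> KK \<omega>"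
    using A1
  proof eventually_elim
    case (elim \<omega>)
    have "ereal (sigma_e^2 / 2) < ereal (sigma_e^2)" using sig_pos by simp
    also note elim
    finally have "eventually (\<lambda>t. ereal (sigma_e^2 / 2) < ereal (avg t \<omega>)) sequentially"
      by (rule less_LiminfD)
    then obtain T where T: "\<And>t. t \<ge> T \<Longrightarrow> sigma_e^2 / 2 < avg t \<omega>"
      by (auto simp: eventually_sequentially)
    define b where "b = 2 / sigma_e^2 + (\<Sum>t<T. inverse (avg t \<omega>))"
    have inv0: "0 \<le> inverse (avg t \<omega>)" for t using avg0 by simp
    have s0: "0 \<le> (\<Sum>t<T. inverse (avg t \<omega>))" using inv0 by (simp add: sum_nonneg)
    have fb: "inverse (avg t \<omega>) \<le> b" for t
    proof (cases "t \<ge> T")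
      case True
      have "inverse (avg t \<omega>) \<le> inverse (sigma_e^2 / 2)"
        using T[OF True] sig_pos by (intro le_imp_inverse_le) auto
      also have "\<dots> = 2 / sigma_e^2" by simp
      finally show ?thesis unfolding b_def using s0 by linarith
    next
      case False
      then have "inverse (avg t \<omega>) \<le> (\<Sum>t<T. inverse (avg t \<omega>))"
        using inv0 by (intro member_le_sum) auto
      moreover have "0 \<le> 2 / sigma_e^2" using sig_pos by simp
      ultimately show ?thesis unfolding b_def by linarith
    qed
    show ?case unfolding KK_def using sup_real_bound(1)[of "\<lambda>t. inverse (avg t \<omega>)" b] inv0 fb by blast
  qed
  have A3: "AE \<omega> in M. \<exists>B. \<forall>t\<ge>2. inverse (Pbar t \<omega>) \<le> B"
    using A2
  proof eventually_elim
    case (elim \<omega>)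
    show ?case
    proof (intro exI allI impI)
      fix t :: nat assume t: "t \<ge> 2"
      then obtain m where m: "t = Suc m" "m \<ge> 1" by (cases t) auto
      have mp: "0 < real m" using m by simp
      have "Pbar t \<omega> = (1 / real (Suc m)) * (\<Sum>s=1..m. (phi s \<omega>)^2)"
        unfolding Pbar_def alg_Pbar_def phi_def m by (simp add: atLeastLessThanSuc_atLeastAtMost)
      also have "\<dots> = (real m / real (Suc m)) * avg m \<omega>"
      proof -
        have gen: "(1 / c) * Q = (a / c) * ((1 / a) * Q)" if "a \<noteq> 0" for a c Q :: real
          using that by (simp add: field_simps)
        show ?thesis unfolding avg_def by (rule gen) (use mp in simp)
      qed
      finally have "inverse (Pbar t \<omega>) = inverse ((real m / real (Suc m)) * avg m \<omega>)"
        by simp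
      also have "\<dots> = (real (Suc m) / real m) * inverse (avg m \<omega>)"
        by (simp only: inverse_mult_distrib inverse_divide)
      also have "\<dots> \<le> 2 * KK \<omega>"
      proof (rule mult_mono)
        show "real (Suc m) / real m \<le> 2" using mp m by (simp add: field_simps)
      qed (use elim avg0 in auto)
      finally show "inverse (Pbar t \<omega>) \<le> 2 * KK \<omega>" .
    qed
  qed
  have Cc: "AE \<omega> in M. (\<lambda>t. theta (Suc t) \<omega> - theta t \<omega>) \<longlonglongrightarrow> 0"
    using B4 A2
  proof eventually_elim
    case (elim \<omega>)
    obtain B where B: "\<And>t. t \<ge> 1 \<Longrightarrow> \<bar>e t \<omega>\<bar> \<le> B \<and> \<bar>phi t \<omega>\<bar> \<le> B" using elim(1) by blast
    have B0: "0 \<le> B" using B[of 1] by (meson abs_ge_zero order_trans order_refl)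
    show ?case
    proof (rule Lim_null_comparison)
      show "(\<lambda>t. B * B * KK \<omega> / real t) \<longlonglongrightarrow> 0" by (rule lim_const_over_n)
      show "eventually (\<lambda>t. norm (theta (Suc t) \<omega> - theta t \<omega>) \<le> B * B * KK \<omega> / real t) sequentially"
        unfolding eventually_sequentially
      proof (intro exI allI impI)
        fix t :: nat assume t: "t \<ge> 1"
        then obtain n where n: "t = Suc n" by (cases t) auto
        have S: "alg_S \<beta> (Y \<omega>) (Suc n) = real t * avg t \<omega>"
          unfolding alg_S_sum avg_def n phi_def Y_def by simp
        have "theta (Suc t) \<omega> - theta t \<omega> = phi t \<omega> * e (Suc t) \<omega> / alg_S \<beta> (Y \<omega>) (Suc n)"
          unfolding theta_def phi_def e_def n Y_def by (rule alg_theta_diff)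
        also have "\<dots> = phi t \<omega> * e (Suc t) \<omega> * (inverse (real t) * inverse (avg t \<omega>))"
          unfolding S by (simp add: divide_inverse inverse_mult_distrib)
        finally have eq: "theta (Suc t) \<omega> - theta t \<omega> = phi t \<omega> * e (Suc t) \<omega> * (inverse (real t) * inverse (avg t \<omega>))" .
        have "\<bar>phi t \<omega> * e (Suc t) \<omega>\<bar> \<le> B * B"
          unfolding abs_mult using B[OF t] B[of "Suc t"] t by (intro mult_mono) auto
        moreover have "0 \<le> inverse (real t) * inverse (avg t \<omega>)" using avg0 by simp
        moreover have "inverse (real t) * inverse (avg t \<omega>) \<le> inverse (real t) * KK \<omega>"
          using elim(2) by (intro mult_left_mono) auto
        ultimately have "\<bar>phi t \<omega> * e (Suc t) \<omega> * (inverse (real t) * inverse (avg t \<omega>))\<bar> \<le> B * B * (inverse (real t) * KK \<omega>)"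
          unfolding abs_mult[of "phi t \<omega> * e (Suc t) \<omega>"]
          by (intro mult_mono) (auto simp: B0)
        then show "norm (theta (Suc t) \<omega> - theta t \<omega>) \<le> B * B * KK \<omega> / real t"
          unfolding eq by (simp add: divide_inverse mult.commute mult.left_commute)
      qed
    qed
  qed
  have part_a1: "AE \<omega> in M. Liminf sequentially (\<lambda>t. ereal ((1 / real t) * (\<Sum>s=1..t. (phi s \<omega>)\<^sup>2)))
                    \<ge> ereal (sigma_e\<^sup>2)"
    using A1 unfolding avg_def .
  have part_a2: "\<exists>KK :: 'a \<Rightarrow> real. KK \<in> borel_measurable M \<and>
          (AE \<omega> in M. \<forall>t\<ge>1. inverse ((1 / real t) * (\<Sum>s=1..t. (phi s \<omega>)\<^sup>2)) \<le> KK \<omega>)"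
    using KK_meas A2 unfolding avg_def by (auto elim!: eventually_mono)
  have part_b: "\<exists>ke kphi kx kz :: nat \<Rightarrow> nat \<Rightarrow> 'a \<Rightarrow> real.
          (\<forall>t\<ge>1. \<forall>j. ke t j \<in> borel_measurable (F (int t - 1)) \<and>
                      kphi t j \<in> borel_measurable (F (int t - 1)) \<and>
                      kx t j \<in> borel_measurable (F (int t - 1)) \<and>
                      kz t j \<in> borel_measurable (F (int t - 1)))
        \<and> (AE \<omega> in M. \<forall>t\<ge>1.
              (\<lambda>j. ke t j \<omega> * eps (int t - int j) \<omega>) sums e t \<omega> \<and>
              (\<lambda>j. kphi t j \<omega> * eps (int t - int j) \<omega>) sums phi t \<omega> \<and>
              (\<lambda>j. kx t j \<omega> * eps (int t - int j) \<omega>) sums x t \<omega> \<and>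
              (\<lambda>j. kz t j \<omega> * eps (int t - int j) \<omega>) sums z t \<omega>)
        \<and> (\<exists>kt :: nat \<Rightarrow> 'a \<Rightarrow> real. (\<forall>j. kt j \<in> borel_measurable M) \<and>
             (AE \<omega> in M. (\<forall>t\<ge>1. \<forall>j. max (max \<bar>ke t j \<omega>\<bar> \<bar>kphi t j \<omega>\<bar>)
                                        (max \<bar>kx t j \<omega>\<bar> \<bar>kz t j \<omega>\<bar>) \<le> kt j \<omega>)
                        \<and> summable (\<lambda>j. kt j \<omega>)))"
    using B_meas B_sums kt_meas B_bound unfolding mx_def by blast
  show ?thesis using part_a1 part_a2 A3 part_b B4 Cc by blast
qed

end
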